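(* Let $\mathbf{k}$ be a field of characteristic $\neq 2$. Let $(\wedge V,d)$ be a minimal algebra generated in degree $1$ (i.e. $V=V^1$), and let $(A,d)$, $(B,d)$ be CDGAs over $\mathbf{k}$ with $A^0=\mathbf{k}$. If $f:(\wedge V,d)\to(A,d)$ is a CDGA morphism and $\psi:(B,d)\to(A,d)$ is a quasi-isomorphism (not necessarily surjective), then there is a CDGA morphism $g:(\wedge V,d)\to(B,d)$ with $\psi\circ g=f$. Moreover, if $f$ is a quasi-isomorphism then so is $g$.
   Context: A CDGA over $\mathbf{k}$ is a graded-commutative algebra $A=\bigoplus_{i\ge0}A^i$ with a degree $+1$ derivation $d$, $d^2=0$. A quasi-isomorphism is a CDGA morphism inducing an isomorphism in cohomology. A minimal algebra is a CDGA $(\wedge V,d)$ where $\wedge V$ is the free graded-commutative algebra on a graded vector space $V=\bigoplus_{i\geq1}V^i$, and there is a basis $\{x_\tau\}_{\tau\in I}$ of $V$ indexed by a well-ordered set $I$ such that $\deg x_\mu\le\deg x_\tau$ whenever $\mu<\tau$ and each $dx_\tau$ lies in the subalgebra generated by the $x_\mu$ with $\mu<\tau$. *)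

theory Defs
  imports Main
begin

record ('a, 'k) cdga =
  cg_carrier :: "'a set"
  cg_hom :: "nat \<Rightarrow> 'a set"          (* the degree-i component A^i *)
  cg_zero :: 'a
  cg_add :: "'a \<Rightarrow> 'a \<Rightarrow> 'a"
  cg_smult :: "'k \<Rightarrow> 'a \<Rightarrow> 'a"
  cg_mul :: "'a \<Rightarrow> 'a \<Rightarrow> 'a"
  cg_one :: 'a
  cg_diff :: "'a \<Rightarrow> 'a"

definition cg_sub :: "('a, 'k::field) cdga \<Rightarrow> 'a \<Rightarrow> 'a \<Rightarrow> 'a" where
  "cg_sub A x y = cg_add A x (cg_smult A (-1) y)"

definition cg_lsum :: "('a, 'k) cdga \<Rightarrow> 'a list \<Rightarrow> 'a" where
  "cg_lsum A xs = foldr (cg_add A) xs (cg_zero A)"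

definition cdga :: "('a, 'k::field) cdga \<Rightarrow> bool" where
  "cdga A \<longleftrightarrow>
    \<comment> \<open>vector space over 'k\<close>
    cg_zero A \<in> cg_carrier A \<and> cg_one A \<in> cg_carrier A \<and>
    (\<forall>x\<in>cg_carrier A. \<forall>y\<in>cg_carrier A. cg_add A x y \<in> cg_carrier A) \<and>
    (\<forall>c. \<forall>x\<in>cg_carrier A. cg_smult A c x \<in> cg_carrier A) \<and>
    (\<forall>x\<in>cg_carrier A. \<forall>y\<in>cg_carrier A. cg_mul A x y \<in> cg_carrier A) \<and>
    (\<forall>x\<in>cg_carrier A. cg_diff A x \<in> cg_carrier A) \<and>
    (\<forall>x\<in>cg_carrier A. \<forall>y\<in>cg_carrier A. \<forall>z\<in>cg_carrier A.
        cg_add A (cg_add A x y) z = cg_add A x (cg_add A y z)) \<and>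
    (\<forall>x\<in>cg_carrier A. \<forall>y\<in>cg_carrier A. cg_add A x y = cg_add A y x) \<and>
    (\<forall>x\<in>cg_carrier A. cg_add A (cg_zero A) x = x) \<and>
    (\<forall>x\<in>cg_carrier A. cg_add A x (cg_smult A (-1) x) = cg_zero A) \<and>
    (\<forall>a b. \<forall>x\<in>cg_carrier A. cg_smult A (a * b) x = cg_smult A a (cg_smult A b x)) \<and>
    (\<forall>x\<in>cg_carrier A. cg_smult A 1 x = x) \<and>
    (\<forall>a b. \<forall>x\<in>cg_carrier A. cg_smult A (a + b) x = cg_add A (cg_smult A a x) (cg_smult A b x)) \<and>
    (\<forall>a. \<forall>x\<in>cg_carrier A. \<forall>y\<in>cg_carrier A.
        cg_smult A a (cg_add A x y) = cg_add A (cg_smult A a x) (cg_smult A a y)) \<and>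
    \<comment> \<open>grading: A = direct sum of the subspaces A^i, i \<ge> 0\<close>
    (\<forall>i. cg_hom A i \<subseteq> cg_carrier A \<and> cg_zero A \<in> cg_hom A i \<and>
         (\<forall>x\<in>cg_hom A i. \<forall>y\<in>cg_hom A i. cg_add A x y \<in> cg_hom A i) \<and>
         (\<forall>c. \<forall>x\<in>cg_hom A i. cg_smult A c x \<in> cg_hom A i)) \<and>
    (\<forall>x\<in>cg_carrier A. \<exists>!c::nat \<Rightarrow> 'a. (\<forall>i. c i \<in> cg_hom A i) \<and>
         (\<exists>N. (\<forall>i\<ge>N. c i = cg_zero A) \<and> x = cg_lsum A (map c [0..<N]))) \<and>
    \<comment> \<open>graded algebra: associative, unital, bilinear, A^i A^j \<subseteq> A^(i+j)\<close>
    (\<forall>x\<in>cg_carrier A. \<forall>y\<in>cg_carrier A. \<forall>z\<in>cg_carrier A.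
        cg_mul A (cg_mul A x y) z = cg_mul A x (cg_mul A y z)) \<and>
    (\<forall>x\<in>cg_carrier A. cg_mul A (cg_one A) x = x \<and> cg_mul A x (cg_one A) = x) \<and>
    (\<forall>x\<in>cg_carrier A. \<forall>y\<in>cg_carrier A. \<forall>z\<in>cg_carrier A.
        cg_mul A x (cg_add A y z) = cg_add A (cg_mul A x y) (cg_mul A x z) \<and>
        cg_mul A (cg_add A y z) x = cg_add A (cg_mul A y x) (cg_mul A z x)) \<and>
    (\<forall>a. \<forall>x\<in>cg_carrier A. \<forall>y\<in>cg_carrier A.
        cg_mul A (cg_smult A a x) y = cg_smult A a (cg_mul A x y) \<and>
        cg_mul A x (cg_smult A a y) = cg_smult A a (cg_mul A x y)) \<and>
    cg_one A \<in> cg_hom A 0 \<and>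
    (\<forall>i j. \<forall>x\<in>cg_hom A i. \<forall>y\<in>cg_hom A j. cg_mul A x y \<in> cg_hom A (i + j)) \<and>
    \<comment> \<open>graded commutativity\<close>
    (\<forall>i j. \<forall>x\<in>cg_hom A i. \<forall>y\<in>cg_hom A j.
        cg_mul A x y = cg_smult A ((-1) ^ (i * j)) (cg_mul A y x)) \<and>
    \<comment> \<open>differential: linear, degree +1, graded Leibniz rule, d squared = 0\<close>
    (\<forall>x\<in>cg_carrier A. \<forall>y\<in>cg_carrier A. cg_diff A (cg_add A x y) = cg_add A (cg_diff A x) (cg_diff A y)) \<and>
    (\<forall>a. \<forall>x\<in>cg_carrier A. cg_diff A (cg_smult A a x) = cg_smult A a (cg_diff A x)) \<and>
    (\<forall>i. \<forall>x\<in>cg_hom A i. cg_diff A x \<in> cg_hom A (Suc i)) \<and>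
    (\<forall>i. \<forall>x\<in>cg_hom A i. \<forall>y\<in>cg_carrier A.
        cg_diff A (cg_mul A x y) =
          cg_add A (cg_mul A (cg_diff A x) y) (cg_smult A ((-1) ^ i) (cg_mul A x (cg_diff A y)))) \<and>
    (\<forall>x\<in>cg_carrier A. cg_diff A (cg_diff A x) = cg_zero A)"

text \<open>A^0 = k (the unit map k \<rightarrow> A^0 is an isomorphism).\<close>
definition cg_connected :: "('a, 'k::field) cdga \<Rightarrow> bool" where
  "cg_connected A \<longleftrightarrow> cg_one A \<noteq> cg_zero A \<and> cg_hom A 0 = range (\<lambda>c. cg_smult A c (cg_one A))"

definition cdga_hom :: "('a, 'k::field) cdga \<Rightarrow> ('b, 'k) cdga \<Rightarrow> ('a \<Rightarrow> 'b) \<Rightarrow> bool" where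
  "cdga_hom A B f \<longleftrightarrow>
    (\<forall>x\<in>cg_carrier A. f x \<in> cg_carrier B) \<and>
    (\<forall>i. \<forall>x\<in>cg_hom A i. f x \<in> cg_hom B i) \<and>
    (\<forall>x\<in>cg_carrier A. \<forall>y\<in>cg_carrier A. f (cg_add A x y) = cg_add B (f x) (f y)) \<and>
    (\<forall>a. \<forall>x\<in>cg_carrier A. f (cg_smult A a x) = cg_smult B a (f x)) \<and>
    (\<forall>x\<in>cg_carrier A. \<forall>y\<in>cg_carrier A. f (cg_mul A x y) = cg_mul B (f x) (f y)) \<and>
    f (cg_one A) = cg_one B \<and>
    (\<forall>x\<in>cg_carrier A. f (cg_diff A x) = cg_diff B (f x))"

definition cocycle :: "('a, 'k) cdga \<Rightarrow> nat \<Rightarrow> 'a \<Rightarrow> bool" where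
  "cocycle A i x \<longleftrightarrow> x \<in> cg_hom A i \<and> cg_diff A x = cg_zero A"

definition coboundary :: "('a, 'k) cdga \<Rightarrow> nat \<Rightarrow> 'a \<Rightarrow> bool" where
  "coboundary A i x \<longleftrightarrow> x = cg_zero A \<or> (\<exists>j y. Suc j = i \<and> y \<in> cg_hom A j \<and> x = cg_diff A y)"

text \<open>A morphism inducing, in every degree i, a bijection
  H^i(A) = Z^i(A)/B^i(A) \<rightarrow> H^i(B) (injectivity and surjectivity spelled out).\<close>
definition quasi_iso :: "('a, 'k::field) cdga \<Rightarrow> ('b, 'k) cdga \<Rightarrow> ('a \<Rightarrow> 'b) \<Rightarrow> bool" where
  "quasi_iso A B f \<longleftrightarrow> cdga_hom A B f \<and>
    (\<forall>i. (\<forall>z. cocycle A i z \<longrightarrow> coboundary B i (f z) \<longrightarrow> coboundary A i z) \<and>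
         (\<forall>w. cocycle B i w \<longrightarrow> (\<exists>z. cocycle A i z \<and> coboundary B i (cg_sub B (f z) w))))"

inductive_set subalg :: "('a, 'k::field) cdga \<Rightarrow> 'a set \<Rightarrow> 'a set" for A G where
  sa_one: "cg_one A \<in> subalg A G"
| sa_gen: "x \<in> G \<Longrightarrow> x \<in> subalg A G"
| sa_add: "x \<in> subalg A G \<Longrightarrow> y \<in> subalg A G \<Longrightarrow> cg_add A x y \<in> subalg A G"
| sa_smult: "x \<in> subalg A G \<Longrightarrow> cg_smult A c x \<in> subalg A G"
| sa_mul: "x \<in> subalg A G \<Longrightarrow> y \<in> subalg A G \<Longrightarrow> cg_mul A x y \<in> subalg A G"

text \<open>For V concentrated in degree 1 (and char k \<noteq> 2) this is the exterior algebra.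
  An element is a finitely supported family of coefficients c S, indexed by the finite
  subsets S of I; the basis vector for S = {\<tau>1 < ... < \<tau>n} is x_\<tau>1 ... x_\<tau>n.\<close>

definition ext_sign :: "'i::linorder set \<Rightarrow> 'i set \<Rightarrow> 'k::field" where
  "ext_sign S T = (-1) ^ card {(s, t). s \<in> S \<and> t \<in> T \<and> t < s}"

definition ext_carrier :: "'i set \<Rightarrow> ('i set \<Rightarrow> 'k::field) set" where
  "ext_carrier I = {c. finite {S. c S \<noteq> 0} \<and> (\<forall>S. c S \<noteq> 0 \<longrightarrow> finite S \<and> S \<subseteq> I)}"

definition ext_mul :: "('i::linorder set \<Rightarrow> 'k::field) \<Rightarrow> ('i set \<Rightarrow> 'k) \<Rightarrow> 'i set \<Rightarrow> 'k" where
  "ext_mul a b U = (\<Sum>S\<in>Pow U. a S * b (U - S) * ext_sign S (U - S))"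

definition ext_alg :: "'i::linorder set \<Rightarrow> (('i set \<Rightarrow> 'k::field) \<Rightarrow> ('i set \<Rightarrow> 'k))
    \<Rightarrow> ('i set \<Rightarrow> 'k, 'k) cdga" where
  "ext_alg I D = \<lparr> cg_carrier = ext_carrier I,
                   cg_hom = (\<lambda>n. {c \<in> ext_carrier I. \<forall>S. c S \<noteq> 0 \<longrightarrow> card S = n}),
                   cg_zero = (\<lambda>S. 0),
                   cg_add = (\<lambda>a b S. a S + b S),
                   cg_smult = (\<lambda>k a S. k * a S),
                   cg_mul = ext_mul,
                   cg_one = (\<lambda>S. if S = {} then 1 else 0),
                   cg_diff = D \<rparr>"

definition ext_gen :: "'i \<Rightarrow> 'i set \<Rightarrow> 'k::field" where
  "ext_gen \<tau> = (\<lambda>S. if S = {\<tau>} then 1 else 0)"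

text \<open>(\<and>V, d) with V = V^1 spanned by (x_\<tau>)_{\<tau>\<in>I}, I well-ordered, is a minimal algebra:
  it is a CDGA and each d x_\<tau> lies in the subalgebra generated by the x_\<mu>, \<mu> < \<tau>.
  (The degree condition on the ordering is vacuous since all generators have degree 1.)\<close>
definition minimal_deg1 :: "'i::wellorder set \<Rightarrow> (('i set \<Rightarrow> 'k::field) \<Rightarrow> ('i set \<Rightarrow> 'k)) \<Rightarrow> bool" where
  "minimal_deg1 I D \<longleftrightarrow> cdga (ext_alg I D) \<and>
     (\<forall>\<tau>\<in>I. D (ext_gen \<tau>) \<in> subalg (ext_alg I D) (ext_gen ` {\<mu>\<in>I. \<mu> < \<tau>}))"

end

theory Submission
  imports Defs "HOL-Algebra.Ring"
begin

definition RA :: "('a,'k) cdga \<Rightarrow> 'a ring" where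
  "RA A = \<lparr>carrier = cg_carrier A, monoid.mult = cg_mul A, one = cg_one A,
           zero = cg_zero A, add = cg_add A\<rparr>"

lemma RA_simps[simp]: "carrier (RA A) = cg_carrier A" "monoid.mult (RA A) = cg_mul A"
  "one (RA A) = cg_one A" "zero (RA A) = cg_zero A" "add (RA A) = cg_add A"
  by (simp_all add: RA_def)

locale cd = fixes A :: "('a,'k::field) cdga" assumes cd: "cdga A"
begin
lemmas X1 = cd[unfolded cdga_def, THEN conjunct1]
lemmas X2 = cd[unfolded cdga_def, THEN conjunct2, THEN conjunct1]
lemmas X3 = cd[unfolded cdga_def, THEN conjunct2, THEN conjunct2, THEN conjunct1]
lemmas X4 = cd[unfolded cdga_def, THEN conjunct2, THEN conjunct2, THEN conjunct2, THEN conjunct1]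
lemmas X5 = cd[unfolded cdga_def, THEN conjunct2, THEN conjunct2, THEN conjunct2, THEN conjunct2, THEN conjunct1]
lemmas X6 = cd[unfolded cdga_def, THEN conjunct2, THEN conjunct2, THEN conjunct2, THEN conjunct2, THEN conjunct2, THEN conjunct1]
lemmas X7 = cd[unfolded cdga_def, THEN conjunct2, THEN conjunct2, THEN conjunct2, THEN conjunct2, THEN conjunct2, THEN conjunct2, THEN conjunct1]
lemmas X8 = cd[unfolded cdga_def, THEN conjunct2, THEN conjunct2, THEN conjunct2, THEN conjunct2, THEN conjunct2, THEN conjunct2, THEN conjunct2, THEN conjunct1]
lemmas X9 = cd[unfolded cdga_def, THEN conjunct2, THEN conjunct2, THEN conjunct2, THEN conjunct2, THEN conjunct2, THEN conjunct2, THEN conjunct2, THEN conjunct2, THEN conjunct1]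
lemmas X10 = cd[unfolded cdga_def, THEN conjunct2, THEN conjunct2, THEN conjunct2, THEN conjunct2, THEN conjunct2, THEN conjunct2, THEN conjunct2, THEN conjunct2, THEN conjunct2, THEN conjunct1]
lemmas X11 = cd[unfolded cdga_def, THEN conjunct2, THEN conjunct2, THEN conjunct2, THEN conjunct2, THEN conjunct2, THEN conjunct2, THEN conjunct2, THEN conjunct2, THEN conjunct2, THEN conjunct2, THEN conjunct1]
lemmas X12 = cd[unfolded cdga_def, THEN conjunct2, THEN conjunct2, THEN conjunct2, THEN conjunct2, THEN conjunct2, THEN conjunct2, THEN conjunct2, THEN conjunct2, THEN conjunct2, THEN conjunct2, THEN conjunct2, THEN conjunct1]
lemmas X13 = cd[unfolded cdga_def, THEN conjunct2, THEN conjunct2, THEN conjunct2, THEN conjunct2, THEN conjunct2, THEN conjunct2, THEN conjunct2, THEN conjunct2, THEN conjunct2, THEN conjunct2, THEN conjunct2, THEN conjunct2, THEN conjunct1]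
lemmas X14 = cd[unfolded cdga_def, THEN conjunct2, THEN conjunct2, THEN conjunct2, THEN conjunct2, THEN conjunct2, THEN conjunct2, THEN conjunct2, THEN conjunct2, THEN conjunct2, THEN conjunct2, THEN conjunct2, THEN conjunct2, THEN conjunct2, THEN conjunct1]
lemmas X15 = cd[unfolded cdga_def, THEN conjunct2, THEN conjunct2, THEN conjunct2, THEN conjunct2, THEN conjunct2, THEN conjunct2, THEN conjunct2, THEN conjunct2, THEN conjunct2, THEN conjunct2, THEN conjunct2, THEN conjunct2, THEN conjunct2, THEN conjunct2, THEN conjunct1]
lemmas X16 = cd[unfolded cdga_def, THEN conjunct2, THEN conjunct2, THEN conjunct2, THEN conjunct2, THEN conjunct2, THEN conjunct2, THEN conjunct2, THEN conjunct2, THEN conjunct2, THEN conjunct2, THEN conjunct2, THEN conjunct2, THEN conjunct2, THEN conjunct2, THEN conjunct2, THEN conjunct1]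
lemmas X17 = cd[unfolded cdga_def, THEN conjunct2, THEN conjunct2, THEN conjunct2, THEN conjunct2, THEN conjunct2, THEN conjunct2, THEN conjunct2, THEN conjunct2, THEN conjunct2, THEN conjunct2, THEN conjunct2, THEN conjunct2, THEN conjunct2, THEN conjunct2, THEN conjunct2, THEN conjunct2, THEN conjunct1]
lemmas X18 = cd[unfolded cdga_def, THEN conjunct2, THEN conjunct2, THEN conjunct2, THEN conjunct2, THEN conjunct2, THEN conjunct2, THEN conjunct2, THEN conjunct2, THEN conjunct2, THEN conjunct2, THEN conjunct2, THEN conjunct2, THEN conjunct2, THEN conjunct2, THEN conjunct2, THEN conjunct2, THEN conjunct2, THEN conjunct1]
lemmas X19 = cd[unfolded cdga_def, THEN conjunct2, THEN conjunct2, THEN conjunct2, THEN conjunct2, THEN conjunct2, THEN conjunct2, THEN conjunct2, THEN conjunct2, THEN conjunct2, THEN conjunct2, THEN conjunct2, THEN conjunct2, THEN conjunct2, THEN conjunct2, THEN conjunct2, THEN conjunct2, THEN conjunct2, THEN conjunct2, THEN conjunct1]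
lemmas X20 = cd[unfolded cdga_def, THEN conjunct2, THEN conjunct2, THEN conjunct2, THEN conjunct2, THEN conjunct2, THEN conjunct2, THEN conjunct2, THEN conjunct2, THEN conjunct2, THEN conjunct2, THEN conjunct2, THEN conjunct2, THEN conjunct2, THEN conjunct2, THEN conjunct2, THEN conjunct2, THEN conjunct2, THEN conjunct2, THEN conjunct2, THEN conjunct1]
lemmas X21 = cd[unfolded cdga_def, THEN conjunct2, THEN conjunct2, THEN conjunct2, THEN conjunct2, THEN conjunct2, THEN conjunct2, THEN conjunct2, THEN conjunct2, THEN conjunct2, THEN conjunct2, THEN conjunct2, THEN conjunct2, THEN conjunct2, THEN conjunct2, THEN conjunct2, THEN conjunct2, THEN conjunct2, THEN conjunct2, THEN conjunct2, THEN conjunct2, THEN conjunct1]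
lemmas X22 = cd[unfolded cdga_def, THEN conjunct2, THEN conjunct2, THEN conjunct2, THEN conjunct2, THEN conjunct2, THEN conjunct2, THEN conjunct2, THEN conjunct2, THEN conjunct2, THEN conjunct2, THEN conjunct2, THEN conjunct2, THEN conjunct2, THEN conjunct2, THEN conjunct2, THEN conjunct2, THEN conjunct2, THEN conjunct2, THEN conjunct2, THEN conjunct2, THEN conjunct2, THEN conjunct1]
lemmas X23 = cd[unfolded cdga_def, THEN conjunct2, THEN conjunct2, THEN conjunct2, THEN conjunct2, THEN conjunct2, THEN conjunct2, THEN conjunct2, THEN conjunct2, THEN conjunct2, THEN conjunct2, THEN conjunct2, THEN conjunct2, THEN conjunct2, THEN conjunct2, THEN conjunct2, THEN conjunct2, THEN conjunct2, THEN conjunct2, THEN conjunct2, THEN conjunct2, THEN conjunct2, THEN conjunct2, THEN conjunct1]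
lemmas X24 = cd[unfolded cdga_def, THEN conjunct2, THEN conjunct2, THEN conjunct2, THEN conjunct2, THEN conjunct2, THEN conjunct2, THEN conjunct2, THEN conjunct2, THEN conjunct2, THEN conjunct2, THEN conjunct2, THEN conjunct2, THEN conjunct2, THEN conjunct2, THEN conjunct2, THEN conjunct2, THEN conjunct2, THEN conjunct2, THEN conjunct2, THEN conjunct2, THEN conjunct2, THEN conjunct2, THEN conjunct2, THEN conjunct1]
lemmas X25 = cd[unfolded cdga_def, THEN conjunct2, THEN conjunct2, THEN conjunct2, THEN conjunct2, THEN conjunct2, THEN conjunct2, THEN conjunct2, THEN conjunct2, THEN conjunct2, THEN conjunct2, THEN conjunct2, THEN conjunct2, THEN conjunct2, THEN conjunct2, THEN conjunct2, THEN conjunct2, THEN conjunct2, THEN conjunct2, THEN conjunct2, THEN conjunct2, THEN conjunct2, THEN conjunct2, THEN conjunct2, THEN conjunct2, THEN conjunct1]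
lemmas X26 = cd[unfolded cdga_def, THEN conjunct2, THEN conjunct2, THEN conjunct2, THEN conjunct2, THEN conjunct2, THEN conjunct2, THEN conjunct2, THEN conjunct2, THEN conjunct2, THEN conjunct2, THEN conjunct2, THEN conjunct2, THEN conjunct2, THEN conjunct2, THEN conjunct2, THEN conjunct2, THEN conjunct2, THEN conjunct2, THEN conjunct2, THEN conjunct2, THEN conjunct2, THEN conjunct2, THEN conjunct2, THEN conjunct2, THEN conjunct2, THEN conjunct1]
lemmas X27 = cd[unfolded cdga_def, THEN conjunct2, THEN conjunct2, THEN conjunct2, THEN conjunct2, THEN conjunct2, THEN conjunct2, THEN conjunct2, THEN conjunct2, THEN conjunct2, THEN conjunct2, THEN conjunct2, THEN conjunct2, THEN conjunct2, THEN conjunct2, THEN conjunct2, THEN conjunct2, THEN conjunct2, THEN conjunct2, THEN conjunct2, THEN conjunct2, THEN conjunct2, THEN conjunct2, THEN conjunct2, THEN conjunct2, THEN conjunct2, THEN conjunct2, THEN conjunct1]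
lemmas X28 = cd[unfolded cdga_def, THEN conjunct2, THEN conjunct2, THEN conjunct2, THEN conjunct2, THEN conjunct2, THEN conjunct2, THEN conjunct2, THEN conjunct2, THEN conjunct2, THEN conjunct2, THEN conjunct2, THEN conjunct2, THEN conjunct2, THEN conjunct2, THEN conjunct2, THEN conjunct2, THEN conjunct2, THEN conjunct2, THEN conjunct2, THEN conjunct2, THEN conjunct2, THEN conjunct2, THEN conjunct2, THEN conjunct2, THEN conjunct2, THEN conjunct2, THEN conjunct2]

lemma zero_c[simp]: "cg_zero A \<in> cg_carrier A" by (rule X1)
lemma one_c[simp]: "cg_one A \<in> cg_carrier A" by (rule X2)
lemma add_c[simp]: "x \<in> cg_carrier A \<Longrightarrow> y \<in> cg_carrier A \<Longrightarrow> cg_add A x y \<in> cg_carrier A"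
  using X3 by blast
lemma sm_c[simp]: "x \<in> cg_carrier A \<Longrightarrow> cg_smult A c x \<in> cg_carrier A"
  using X4 by blast
lemma mul_c[simp]: "x \<in> cg_carrier A \<Longrightarrow> y \<in> cg_carrier A \<Longrightarrow> cg_mul A x y \<in> cg_carrier A"
  using X5 by blast
lemma d_c[simp]: "x \<in> cg_carrier A \<Longrightarrow> cg_diff A x \<in> cg_carrier A"
  using X6 by blast
lemma add_assoc: "x \<in> cg_carrier A \<Longrightarrow> y \<in> cg_carrier A \<Longrightarrow> z \<in> cg_carrier A \<Longrightarrow>
   cg_add A (cg_add A x y) z = cg_add A x (cg_add A y z)"
  using X7 by blast
lemma add_comm: "x \<in> cg_carrier A \<Longrightarrow> y \<in> cg_carrier A \<Longrightarrow> cg_add A x y = cg_add A y x"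
  using X8 by blast
lemma add_zero[simp]: "x \<in> cg_carrier A \<Longrightarrow> cg_add A (cg_zero A) x = x"
  using X9 by blast
lemma add_neg: "x \<in> cg_carrier A \<Longrightarrow> cg_add A x (cg_smult A (-1) x) = cg_zero A"
  using X10 by blast
lemma sm_sm: "x \<in> cg_carrier A \<Longrightarrow> cg_smult A a (cg_smult A b x) = cg_smult A (a * b) x"
  using X11 by simp
lemma sm_one[simp]: "x \<in> cg_carrier A \<Longrightarrow> cg_smult A 1 x = x"
  using X12 by blast
lemma sm_addk: "x \<in> cg_carrier A \<Longrightarrow> cg_smult A (a + b) x = cg_add A (cg_smult A a x) (cg_smult A b x)"
  using X13 by blast
lemma sm_add: "x \<in> cg_carrier A \<Longrightarrow> y \<in> cg_carrier A \<Longrightarrow>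
   cg_smult A a (cg_add A x y) = cg_add A (cg_smult A a x) (cg_smult A a y)"
  using X14 by blast
lemma hom_c: "x \<in> cg_hom A i \<Longrightarrow> x \<in> cg_carrier A"
  using X15 by blast
lemma hom_zero[simp]: "cg_zero A \<in> cg_hom A i"
  using X15 by blast
lemma hom_add[simp]: "x \<in> cg_hom A i \<Longrightarrow> y \<in> cg_hom A i \<Longrightarrow> cg_add A x y \<in> cg_hom A i"
  using X15 by blast
lemma hom_sm[simp]: "x \<in> cg_hom A i \<Longrightarrow> cg_smult A c x \<in> cg_hom A i"
  using X15 by blast
lemma mul_assoc: "x \<in> cg_carrier A \<Longrightarrow> y \<in> cg_carrier A \<Longrightarrow> z \<in> cg_carrier A \<Longrightarrow>
   cg_mul A (cg_mul A x y) z = cg_mul A x (cg_mul A y z)"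
  using X17 by blast
lemma mul_one[simp]: "x \<in> cg_carrier A \<Longrightarrow> cg_mul A (cg_one A) x = x"
  "x \<in> cg_carrier A \<Longrightarrow> cg_mul A x (cg_one A) = x"
  using X18 by blast+
lemma distr: "x \<in> cg_carrier A \<Longrightarrow> y \<in> cg_carrier A \<Longrightarrow> z \<in> cg_carrier A \<Longrightarrow>
   cg_mul A x (cg_add A y z) = cg_add A (cg_mul A x y) (cg_mul A x z)"
  "x \<in> cg_carrier A \<Longrightarrow> y \<in> cg_carrier A \<Longrightarrow> z \<in> cg_carrier A \<Longrightarrow>
   cg_mul A (cg_add A y z) x = cg_add A (cg_mul A y x) (cg_mul A z x)"
  using X19 by blast+
lemma mul_sm: "x \<in> cg_carrier A \<Longrightarrow> y \<in> cg_carrier A \<Longrightarrow>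
   cg_mul A (cg_smult A a x) y = cg_smult A a (cg_mul A x y)"
  "x \<in> cg_carrier A \<Longrightarrow> y \<in> cg_carrier A \<Longrightarrow>
   cg_mul A x (cg_smult A a y) = cg_smult A a (cg_mul A x y)"
  using X20 by blast+
lemma one_hom[simp]: "cg_one A \<in> cg_hom A 0"
  using X21 by blast
lemma hom_mul: "x \<in> cg_hom A i \<Longrightarrow> y \<in> cg_hom A j \<Longrightarrow> cg_mul A x y \<in> cg_hom A (i + j)"
  using X22 by blast
lemma gcomm: "x \<in> cg_hom A i \<Longrightarrow> y \<in> cg_hom A j \<Longrightarrow>
    cg_mul A x y = cg_smult A ((-1) ^ (i * j)) (cg_mul A y x)"
  using X23 by blast
lemma d_add: "x \<in> cg_carrier A \<Longrightarrow> y \<in> cg_carrier A \<Longrightarrow>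
   cg_diff A (cg_add A x y) = cg_add A (cg_diff A x) (cg_diff A y)"
  using X24 by blast
lemma d_sm: "x \<in> cg_carrier A \<Longrightarrow> cg_diff A (cg_smult A a x) = cg_smult A a (cg_diff A x)"
  using X25 by blast
lemma d_hom: "x \<in> cg_hom A i \<Longrightarrow> cg_diff A x \<in> cg_hom A (Suc i)"
  using X26 by blast
lemma leib: "x \<in> cg_hom A i \<Longrightarrow> y \<in> cg_carrier A \<Longrightarrow>
   cg_diff A (cg_mul A x y) =
     cg_add A (cg_mul A (cg_diff A x) y) (cg_smult A ((-1) ^ i) (cg_mul A x (cg_diff A y)))"
  using X27 by blast
lemma dd[simp]: "x \<in> cg_carrier A \<Longrightarrow> cg_diff A (cg_diff A x) = cg_zero A"
  using X28 by blast

lemma ring: "ring (RA A)"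
proof (rule ringI)
  show "abelian_group (RA A)"
  proof (rule abelian_groupI)
    fix x assume x: "x \<in> carrier (RA A)"
    show "\<exists>y\<in>carrier (RA A). y \<oplus>\<^bsub>RA A\<^esub> x = \<zero>\<^bsub>RA A\<^esub>"
      using x add_neg[of x] add_comm[of x "cg_smult A (-1) x"] by (intro bexI[of _ "cg_smult A (-1) x"]) auto
  qed (auto simp: add_assoc intro: add_comm)
  show "monoid (RA A)"
    by (rule monoidI) (auto simp: mul_assoc)
qed (auto simp: distr)

sublocale R: ring "RA A"
  rewrites "carrier (RA A) = cg_carrier A" and "monoid.mult (RA A) = cg_mul A"
  and "one (RA A) = cg_one A" and "zero (RA A) = cg_zero A" and "add (RA A) = cg_add A"
  by (rule ring) simp_all

lemma neg_eq: "x \<in> cg_carrier A \<Longrightarrow> cg_smult A (-1) x = a_inv (RA A) x"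
  using R.minus_equality[of "cg_smult A (-1) x" x] add_neg[of x] add_comm[of x "cg_smult A (-1) x"] by simp

lemma sm_zero[simp]: "cg_smult A c (cg_zero A) = cg_zero A"
proof -
  have "cg_smult A c (cg_zero A) = cg_add A (cg_smult A c (cg_zero A)) (cg_smult A c (cg_zero A))"
    using sm_add[of "cg_zero A" "cg_zero A" c] by simp
  then show ?thesis using R.add.l_cancel_one'[of "cg_smult A c (cg_zero A)" "cg_smult A c (cg_zero A)"] by simp
qed

lemma sm_zerok[simp]: "x \<in> cg_carrier A \<Longrightarrow> cg_smult A 0 x = cg_zero A"
proof -
  assume x: "x \<in> cg_carrier A"
  have "cg_smult A 0 x = cg_add A (cg_smult A 0 x) (cg_smult A 0 x)"
    using sm_addk[of x 0 0] x by simp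
  then show ?thesis using R.add.l_cancel_one'[of "cg_smult A 0 x" "cg_smult A 0 x"] x by simp
qed

lemma d_zero[simp]: "cg_diff A (cg_zero A) = cg_zero A"
  using d_sm[of "cg_zero A" 0] by simp

lemma add_zero_r[simp]: "x \<in> cg_carrier A \<Longrightarrow> cg_add A x (cg_zero A) = x"
  by (simp add: add_comm)

lemma d_one[simp]: "cg_diff A (cg_one A) = cg_zero A"
proof -
  have "cg_diff A (cg_one A) = cg_add A (cg_diff A (cg_one A)) (cg_diff A (cg_one A))"
    using leib[OF one_hom one_c] by simp
  then show ?thesis using R.add.l_cancel_one'[of "cg_diff A (cg_one A)" "cg_diff A (cg_one A)"] by simp
qed

lemma sub_eq: "x \<in> cg_carrier A \<Longrightarrow> y \<in> cg_carrier A \<Longrightarrow> z \<in> cg_carrier A \<Longrightarrow>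
  (cg_add A x (cg_smult A (-1) y) = z) \<longleftrightarrow> (x = cg_add A z y)"
  by (simp add: neg_eq) (metis R.add.inv_closed R.add.m_assoc R.l_neg R.r_neg R.r_zero R.a_comm)

lemma fin_in: assumes "V \<subseteq> cg_carrier A" "cg_zero A \<in> V" "(\<And>x y. x \<in> V \<Longrightarrow> y \<in> V \<Longrightarrow> cg_add A x y \<in> V)"
  "finite F" "\<phi> \<in> F \<rightarrow> V" shows "finsum (RA A) \<phi> F \<in> V"
  using assms(4,5)
proof (induction F rule: finite_induct)
  case empty then show ?case using assms by simp
next
  case (insert x F)
  have "\<phi> \<in> F \<rightarrow> cg_carrier A" "\<phi> x \<in> cg_carrier A" using insert.prems assms(1) by auto
  then show ?case using insert assms by (auto simp: R.finsum_insert)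
qed

lemma hom_finsum: "finite F \<Longrightarrow> \<phi> \<in> F \<rightarrow> cg_hom A n \<Longrightarrow> finsum (RA A) \<phi> F \<in> cg_hom A n"
proof -
  have "cg_hom A n \<subseteq> cg_carrier A" using hom_c by auto
  then show "finite F \<Longrightarrow> \<phi> \<in> F \<rightarrow> cg_hom A n \<Longrightarrow> finsum (RA A) \<phi> F \<in> cg_hom A n"
    using fin_in[of "cg_hom A n" F \<phi>] by auto
qed

lemma sm_finsum: "finite F \<Longrightarrow> \<phi> \<in> F \<rightarrow> cg_carrier A \<Longrightarrow>
   cg_smult A c (finsum (RA A) \<phi> F) = finsum (RA A) (\<lambda>i. cg_smult A c (\<phi> i)) F"
proof (induction F rule: finite_induct)
  case empty then show ?case by simp
next
  case (insert x F)
  have "\<phi> \<in> F \<rightarrow> cg_carrier A" "\<phi> x \<in> cg_carrier A" using insert.prems by auto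
  moreover have p: "(\<lambda>i. cg_smult A c (\<phi> i)) \<in> F \<rightarrow> cg_carrier A" using insert.prems by (auto simp: Pi_iff)
  ultimately have "finsum (RA A) (\<lambda>i. cg_smult A c (\<phi> i)) (insert x F) =
     cg_add A (cg_smult A c (\<phi> x)) (finsum (RA A) (\<lambda>i. cg_smult A c (\<phi> i)) F)"
    using insert.hyps by (intro R.finsum_insert) auto
  moreover have "finsum (RA A) \<phi> (insert x F) = cg_add A (\<phi> x) (finsum (RA A) \<phi> F)"
    using insert.hyps \<open>\<phi> \<in> F \<rightarrow> cg_carrier A\<close> \<open>\<phi> x \<in> cg_carrier A\<close> by (intro R.finsum_insert) auto
  ultimately show ?case using insert \<open>\<phi> \<in> F \<rightarrow> cg_carrier A\<close> \<open>\<phi> x \<in> cg_carrier A\<close>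
    by (simp add: sm_add)
qed

end

lemma lin_finsum:
  assumes "cdga A" "cdga B" "V \<subseteq> cg_carrier A" "cg_zero A \<in> V"
    "\<And>x y. x \<in> V \<Longrightarrow> y \<in> V \<Longrightarrow> cg_add A x y \<in> V"
    "\<And>x. x \<in> V \<Longrightarrow> h x \<in> cg_carrier B"
    "h (cg_zero A) = cg_zero B"
    "\<And>x y. x \<in> V \<Longrightarrow> y \<in> V \<Longrightarrow> h (cg_add A x y) = cg_add B (h x) (h y)"
    "finite F" "\<phi> \<in> F \<rightarrow> V"
  shows "h (finsum (RA A) \<phi> F) = finsum (RA B) (\<lambda>i. h (\<phi> i)) F"
proof -
  interpret a: cd A by (rule cd.intro) fact
  interpret b: cd B by (rule cd.intro) fact
  show ?thesis
  using assms(9,10)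
proof (induction F rule: finite_induct)
  case empty then show ?case using assms by simp
next
  case (insert x F)
  have 1: "\<phi> \<in> F \<rightarrow> V" "\<phi> x \<in> V" using insert.prems by auto
  then have 2: "\<phi> \<in> F \<rightarrow> cg_carrier A" "\<phi> x \<in> cg_carrier A" using assms(3) by auto
  have 3: "(\<lambda>i. h (\<phi> i)) \<in> F \<rightarrow> cg_carrier B" "h (\<phi> x) \<in> cg_carrier B" using 1 assms(6) by auto
  have 4: "finsum (RA A) \<phi> F \<in> V" using a.fin_in[OF assms(3,4,5)] insert 1 by auto
  show ?case using insert 1 2 3 4 by (simp add: a.R.finsum_insert b.R.finsum_insert assms(8))
qed
qed

definition kap :: "'i::linorder set \<Rightarrow> 'i set \<Rightarrow> 'k::field" where
  "kap S T = (if S \<inter> T = {} then ext_sign S T else 0)"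

definition sig :: "'i::linorder \<Rightarrow> 'i set \<Rightarrow> 'k::field" where
  "sig s W = (if s \<in> W then 0 else (-1) ^ card {w\<in>W. w < s})"

lemma kap_rec:
  assumes "finite X" "finite T" "s \<notin> X" "\<forall>x\<in>X. s < x"
  shows "(kap (insert s X) T :: 'k::field) = kap X T * sig s (X \<union> T)"
proof (cases "s \<in> T")
  case True then show ?thesis by (auto simp: kap_def sig_def)
next
  case False
  show ?thesis
  proof (cases "X \<inter> T = {}")
    case False then show ?thesis by (auto simp: kap_def)
  next
    case True
    let ?P = "{(a, t). a \<in> insert s X \<and> t \<in> T \<and> t < a}"
    let ?PX = "{(a, t). a \<in> X \<and> t \<in> T \<and> t < a}"
    let ?Q = "Pair s ` {t \<in> T. t < s}"
    have "?P = ?PX \<union> ?Q" by auto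
    moreover have "?PX \<inter> ?Q = {}" using assms(3) by auto
    moreover have "finite ?PX" by (rule finite_subset[of _ "X \<times> T"]) (use assms in auto)
    moreover have "finite ?Q" using assms by auto
    ultimately have c: "card ?P = card ?PX + card ?Q" by (simp add: card_Un_disjoint)
    have "card ?Q = card {t \<in> T. t < s}" by (rule card_image) (auto simp: inj_on_def)
    moreover have "{w \<in> X \<union> T. w < s} = {t \<in> T. t < s}" using assms(4) by auto
    ultimately show ?thesis using c True False assms(3)
      by (simp add: kap_def sig_def ext_sign_def power_add)
  qed
qed


definition esing :: "'i set \<Rightarrow> 'i set \<Rightarrow> 'k::field" where
  "esing S = (\<lambda>U. if U = S then 1 else 0)"

lemma ext_alg_simps[simp]:
  "cg_carrier (ext_alg I D) = ext_carrier I"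
  "cg_hom (ext_alg I D) n = {c \<in> ext_carrier I. \<forall>S. c S \<noteq> 0 \<longrightarrow> card S = n}"
  "cg_zero (ext_alg I D) = (\<lambda>S. 0)"
  "cg_add (ext_alg I D) = (\<lambda>a b S. a S + b S)"
  "cg_smult (ext_alg I D) = (\<lambda>k a S. k * a S)"
  "cg_mul (ext_alg I D) = ext_mul"
  "cg_one (ext_alg I D) = esing {}"
  "cg_diff (ext_alg I D) = D"
  by (auto simp: ext_alg_def esing_def)

lemma ext_gen_esing: "ext_gen t = esing {t}"
  by (simp add: ext_gen_def esing_def)

lemma esing_c: "finite S \<Longrightarrow> S \<subseteq> I \<Longrightarrow> esing S \<in> ext_carrier I"
  by (auto simp: ext_carrier_def esing_def)

lemma esing_hom: "finite S \<Longrightarrow> S \<subseteq> I \<Longrightarrow> esing S \<in> cg_hom (ext_alg I D) (card S)"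
  by (auto simp: ext_carrier_def esing_def)

lemma esing_mul:
  assumes "finite S" "finite T"
  shows "ext_mul (esing S) (esing T) = (\<lambda>U. kap S T * esing (S \<union> T) U)"
proof
  fix U
  show "ext_mul (esing S) (esing T) U = kap S T * esing (S \<union> T) U"
  proof (cases "finite U")
    case False
    then have "U \<noteq> S \<union> T" using assms by auto
    then show ?thesis using False by (simp add: ext_mul_def esing_def)
  next
    case True
    have "ext_mul (esing S) (esing T) U =
      (\<Sum>S'\<in>Pow U. if S' = S then esing T (U - S) * ext_sign S (U - S) else 0)"
      unfolding ext_mul_def by (rule sum.cong) (auto simp: esing_def)
    also have "\<dots> = (if S \<in> Pow U then esing T (U - S) * ext_sign S (U - S) else 0)"
      using True by (simp add: sum.delta')
    also have "\<dots> = kap S T * esing (S \<union> T) U"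
      by (auto simp: esing_def kap_def)
    finally show ?thesis .
  qed
qed

lemma ext_mul_supp: "ext_mul a b U \<noteq> 0 \<Longrightarrow> \<exists>S\<subseteq>U. a S \<noteq> 0 \<and> b (U - S) \<noteq> 0"
  unfolding ext_mul_def by (drule sum.not_neutral_contains_not_neutral) auto

definition EJ :: "'i set \<Rightarrow> 'i set \<Rightarrow> ('i set \<Rightarrow> 'k::field) set" where
  "EJ I J = {c \<in> ext_carrier I. \<forall>S. c S \<noteq> 0 \<longrightarrow> S \<subseteq> J}"

lemma EJ_I: "EJ I I = ext_carrier I"
  by (auto simp: EJ_def ext_carrier_def)

lemma subalg_supp:
  assumes "x \<in> subalg (ext_alg I D) (ext_gen ` J)"
  shows "\<forall>S. x S \<noteq> 0 \<longrightarrow> S \<subseteq> J"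
  using assms
proof induction
  case sa_one then show ?case by (simp add: esing_def)
next
  case (sa_gen x) then show ?case by (auto simp: ext_gen_def split: if_splits)
next
  case (sa_add x y)
  show ?case
  proof (intro allI impI)
    fix S assume "cg_add (ext_alg I D) x y S \<noteq> 0"
    then have "x S \<noteq> 0 \<or> y S \<noteq> 0" by auto
    then show "S \<subseteq> J" using sa_add.IH by blast
  qed
next
  case (sa_smult x c) then show ?case by simp
next
  case (sa_mul x y)
  show ?case
  proof (intro allI impI)
    fix S assume "cg_mul (ext_alg I D) x y S \<noteq> 0"
    then obtain T where "T \<subseteq> S" "x T \<noteq> 0" "y (S - T) \<noteq> 0" using ext_mul_supp[of x y S] by auto
    then have "T \<subseteq> J" "S - T \<subseteq> J" using sa_mul.IH by blast+
    then show "S \<subseteq> J" by blast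
  qed
qed

locale ce =
  fixes I :: "'i::linorder set" and D :: "('i set \<Rightarrow> 'k::field) \<Rightarrow> ('i set \<Rightarrow> 'k)"
  assumes ce: "cdga (ext_alg I D)"
begin

sublocale E: cd "ext_alg I D" by (rule cd.intro) (rule ce)

lemma E_finsum: "finite F \<Longrightarrow> \<phi> \<in> F \<rightarrow> ext_carrier I \<Longrightarrow>
  finsum (RA (ext_alg I D)) \<phi> F = (\<lambda>U. \<Sum>S\<in>F. \<phi> S U)"
proof (induction F rule: finite_induct)
  case empty then show ?case by (simp add: E.R.finsum_empty)
next
  case (insert x F)
  then show ?case by (subst E.R.finsum_insert) auto
qed

lemma E_decomp: "c \<in> ext_carrier I \<Longrightarrow>
  c = finsum (RA (ext_alg I D)) (\<lambda>S. (\<lambda>U. c S * esing S U)) {S. c S \<noteq> 0}"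
proof -
  assume c: "c \<in> ext_carrier I"
  then have fin: "finite {S. c S \<noteq> 0}" by (auto simp: ext_carrier_def)
  have "(\<lambda>S. (\<lambda>U. c S * esing S U)) \<in> {S. c S \<noteq> 0} \<rightarrow> ext_carrier I"
  proof
    fix S assume "S \<in> {S. c S \<noteq> 0}"
    then have "esing S \<in> ext_carrier I" using c by (intro esing_c) (auto simp: ext_carrier_def)
    then show "(\<lambda>U. c S * esing S U) \<in> ext_carrier I"
      using E.sm_c[of "esing S" "c S"] by simp
  qed
  then have "finsum (RA (ext_alg I D)) (\<lambda>S. (\<lambda>U. c S * esing S U)) {S. c S \<noteq> 0} =
     (\<lambda>U. \<Sum>S\<in>{S. c S \<noteq> 0}. c S * esing S U)" using fin by (rule E_finsum[rotated])
  also have "\<dots> = c"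
  proof
    fix U
    have "(\<Sum>S\<in>{S. c S \<noteq> 0}. c S * esing S U) = (\<Sum>S\<in>{S. c S \<noteq> 0}. if U = S then c U else 0)"
      by (rule sum.cong) (auto simp: esing_def)
    also have "\<dots> = c U" using fin by (simp add: sum.delta)
    finally show "(\<Sum>S\<in>{S. c S \<noteq> 0}. c S * esing S U) = c U" .
  qed
  finally show ?thesis by simp
qed

lemma EJ_zero[simp]: "(\<lambda>S. 0::'k) \<in> EJ I J"
  using E.zero_c by (simp add: EJ_def)
lemma EJ_add: "(a::'i set \<Rightarrow> 'k) \<in> EJ I J \<Longrightarrow> b \<in> EJ I J \<Longrightarrow> (\<lambda>S. a S + b S) \<in> EJ I J"
proof -
  assume a: "a \<in> EJ I J" and b: "b \<in> EJ I J"
  have "\<forall>S. a S + b S \<noteq> 0 \<longrightarrow> S \<subseteq> J"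
  proof (intro allI impI)
    fix S assume "a S + b S \<noteq> 0"
    then have "a S \<noteq> 0 \<or> b S \<noteq> 0" by auto
    then show "S \<subseteq> J" using a b by (auto simp: EJ_def)
  qed
  then show ?thesis using E.add_c[of a b] a b by (auto simp: EJ_def)
qed
lemma EJ_sm: "(a::'i set \<Rightarrow> 'k) \<in> EJ I J \<Longrightarrow> (\<lambda>S. k * a S) \<in> EJ I J"
  using E.sm_c[of a k] by (auto simp: EJ_def)
lemma EJ_mul: "(a::'i set \<Rightarrow> 'k) \<in> EJ I J \<Longrightarrow> b \<in> EJ I J \<Longrightarrow> ext_mul a b \<in> EJ I J"
proof -
  assume a: "a \<in> EJ I J" and b: "b \<in> EJ I J"
  have "\<forall>S. ext_mul a b S \<noteq> 0 \<longrightarrow> S \<subseteq> J"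
  proof (intro allI impI)
    fix S assume "ext_mul a b S \<noteq> 0"
    then obtain T where "T \<subseteq> S" "a T \<noteq> 0" "b (S - T) \<noteq> 0" using ext_mul_supp[of a b S] by auto
    then have "T \<subseteq> J" "S - T \<subseteq> J" using a b by (auto simp: EJ_def)
    then show "S \<subseteq> J" by blast
  qed
  then show ?thesis using E.mul_c[of a b] a b by (auto simp: EJ_def)
qed
lemma EJ_esing: "finite S \<Longrightarrow> S \<subseteq> I \<Longrightarrow> S \<subseteq> J \<Longrightarrow> (esing S :: _ \<Rightarrow> 'k) \<in> EJ I J"
  using esing_c by (auto simp: EJ_def esing_def)
lemma EJ_c: "(a::'i set \<Rightarrow> 'k) \<in> EJ I J \<Longrightarrow> a \<in> ext_carrier I"
  by (simp add: EJ_def)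
lemma EJ_fin: "finite F \<Longrightarrow> \<phi> \<in> F \<rightarrow> (EJ I J :: ('i set \<Rightarrow> 'k) set) \<Longrightarrow> finsum (RA (ext_alg I D)) \<phi> F \<in> EJ I J"
  by (rule E.fin_in) (auto simp: EJ_c EJ_add)

end


definition M :: "('a,'k) cdga \<Rightarrow> ('i \<Rightarrow> 'a) \<Rightarrow> 'i list \<Rightarrow> 'a" where
  "M A b xs = foldr (\<lambda>t acc. cg_mul A (b t) acc) xs (cg_one A)"

definition mm :: "('a,'k) cdga \<Rightarrow> ('i::linorder \<Rightarrow> 'a) \<Rightarrow> 'i set \<Rightarrow> 'a" where
  "mm A b S = M A b (sorted_list_of_set S)"

definition G :: "('a,'k::field) cdga \<Rightarrow> ('i::linorder \<Rightarrow> 'a) \<Rightarrow> ('i set \<Rightarrow> 'k) \<Rightarrow> 'a" where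
  "G A b c = finsum (RA A) (\<lambda>S. cg_smult A (c S) (mm A b S)) {S. c S \<noteq> 0}"

lemma M_simps[simp]: "M A b [] = cg_one A" "M A b (x # xs) = cg_mul A (b x) (M A b xs)"
  by (simp_all add: M_def)

lemma M_cong: "(\<forall>t\<in>set xs. b t = b' t) \<Longrightarrow> M A b xs = M A b' xs"
  by (induction xs) auto

lemma mm_cong: "finite S \<Longrightarrow> (\<forall>t\<in>S. b t = b' t) \<Longrightarrow> mm A b S = mm A b' S"
  unfolding mm_def by (rule M_cong) simp

lemma mm_set: "sorted xs \<Longrightarrow> distinct xs \<Longrightarrow> mm A b (set xs) = M A b xs"
  by (simp add: mm_def sorted_list_of_set_sort_remdups distinct_remdups_id sorted_sort_id)

lemma mm_insert_min:
  assumes "finite Y" "\<forall>y\<in>Y. w < y"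
  shows "mm A b (insert w Y) = cg_mul A (b w) (mm A b Y)"
proof -
  let ?l = "w # sorted_list_of_set Y"
  have "sorted ?l" "distinct ?l" using assms by (auto intro: less_imp_le)
  moreover have "set ?l = insert w Y" using assms by simp
  ultimately show ?thesis using mm_set[of ?l A b] by (simp add: mm_def)
qed

context cd
begin

lemma deg1_anti: "x \<in> cg_hom A 1 \<Longrightarrow> y \<in> cg_hom A 1 \<Longrightarrow>
   cg_mul A x y = cg_smult A (-1) (cg_mul A y x)"
  using gcomm[of x 1 y 1] by simp

lemma deg1_sq:
  assumes ch: "CHAR('k) \<noteq> 2" and x: "x \<in> cg_hom A 1"
  shows "cg_mul A x x = cg_zero A"
proof -
  have two: "(2::'k) \<noteq> 0"
  proof
    assume "(2::'k) = 0"
    then have "of_nat 2 = (0::'k)" by simp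
    then have "CHAR('k) dvd 2" by (simp only: of_nat_eq_0_iff_char_dvd)
    moreover have "CHAR('k) \<noteq> 0" using \<open>CHAR('k) dvd 2\<close> by (metis dvd_0_left_iff zero_neq_numeral)
    moreover have "CHAR('k) \<le> 2" using \<open>CHAR('k) dvd 2\<close> by (rule dvd_imp_le) simp
    ultimately show False using ch CHAR_not_1[where 'a='k] by linarith
  qed
  let ?p = "cg_mul A x x"
  have xc: "x \<in> cg_carrier A" using x hom_c by blast
  then have pc: "?p \<in> cg_carrier A" by simp
  have "?p = cg_smult A (-1) ?p" using deg1_anti[OF x x] .
  then have "cg_add A ?p ?p = cg_zero A" using add_neg[OF pc] by simp
  moreover have "cg_add A ?p ?p = cg_smult A 2 ?p" using sm_addk[OF pc, of 1 1] pc by simp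
  ultimately have "cg_smult A 2 ?p = cg_zero A" by simp
  then have "cg_smult A (1/2) (cg_smult A 2 ?p) = cg_zero A" by simp
  then show ?thesis using sm_sm[OF pc, of "1/2" 2] two pc by simp
qed

lemma M_hom: "\<forall>t\<in>set xs. b t \<in> cg_hom A 1 \<Longrightarrow> M A b xs \<in> cg_hom A (length xs)"
  by (induction xs) (auto dest: hom_mul)

lemma M_c: "\<forall>t\<in>set xs. b t \<in> cg_hom A 1 \<Longrightarrow> M A b xs \<in> cg_carrier A"
  using M_hom hom_c by blast

lemma mm_hom: "finite S \<Longrightarrow> \<forall>t\<in>S. b t \<in> cg_hom A 1 \<Longrightarrow> mm A b S \<in> cg_hom A (card S)"
  unfolding mm_def using M_hom[of "sorted_list_of_set S" b] by simp

lemma mm_c: "finite S \<Longrightarrow> \<forall>t\<in>S. b t \<in> cg_hom A 1 \<Longrightarrow> mm A b S \<in> cg_carrier A"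
  using mm_hom hom_c by blast

lemma mmJ_c: "finite S \<Longrightarrow> S \<subseteq> J \<Longrightarrow> \<forall>t\<in>J. b t \<in> cg_hom A 1 \<Longrightarrow> mm A b S \<in> cg_carrier A"
  using mm_c[of S b] by blast

lemma mmJ_hom: "finite S \<Longrightarrow> S \<subseteq> J \<Longrightarrow> \<forall>t\<in>J. b t \<in> cg_hom A 1 \<Longrightarrow> mm A b S \<in> cg_hom A (card S)"
  using mm_hom[of S b] by blast

lemma bM:
  assumes ch: "CHAR('k) \<noteq> 2"
  shows "b s \<in> cg_hom A 1 \<Longrightarrow> \<forall>t\<in>set xs. b t \<in> cg_hom A 1 \<Longrightarrow> sorted xs \<Longrightarrow> distinct xs \<Longrightarrow>
   cg_mul A (b s) (M A b xs) = cg_smult A (sig s (set xs)) (mm A b (insert s (set xs)))"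
proof (induction xs)
  case Nil
  have "b s \<in> cg_carrier A" using Nil hom_c by blast
  moreover have "mm A b {s} = cg_mul A (b s) (cg_one A)" using mm_set[of "[s]" A b] by simp
  ultimately show ?case by (simp add: sig_def)
next
  case (Cons w ws)
  have bs: "b s \<in> cg_carrier A" using Cons hom_c by blast
  have bw: "b w \<in> cg_carrier A" "b w \<in> cg_hom A 1" using Cons hom_c by auto
  have lt: "\<forall>y\<in>set ws. w < y" using Cons.prems(3,4) by (auto simp: le_less)
  have Mws: "M A b ws \<in> cg_carrier A" using Cons.prems by (intro M_c) auto
  have Mwws: "M A b (w # ws) = mm A b (set (w # ws))" using Cons.prems mm_set by metis
  consider "s < w" | "s = w" | "w < s" by fastforce
  then show ?case
  proof cases
    case 1
    then have "{y \<in> set (w # ws). y < s} = {}" using lt by auto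
    moreover have "s \<notin> set (w # ws)" using 1 lt by auto
    ultimately have "sig s (set (w # ws)) = (1::'k)" unfolding sig_def
      by (simp only: if_False card.empty power_0)
    moreover have "mm A b (insert s (set (w # ws))) = cg_mul A (b s) (mm A b (set (w # ws)))"
      using lt 1 by (intro mm_insert_min) auto
    moreover have "mm A b (set (w # ws)) \<in> cg_carrier A" using Cons.prems by (intro mm_c) auto
    ultimately show ?thesis using Mwws bs Mws bw by simp
  next
    case 2
    have "cg_mul A (b s) (M A b (w # ws)) = cg_mul A (cg_mul A (b s) (b s)) (M A b ws)"
      using 2 bs Mws by (simp add: mul_assoc)
    also have "\<dots> = cg_zero A" using deg1_sq[OF ch, of "b s"] Cons.prems Mws by simp
    moreover have "mm A b (set (w # ws)) \<in> cg_carrier A" using Cons.prems by (intro mm_c) auto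
    ultimately show ?thesis using 2 by (simp add: sig_def)
  next
    case 3
    have ih: "cg_mul A (b s) (M A b ws) = cg_smult A (sig s (set ws)) (mm A b (insert s (set ws)))"
      using Cons by auto
    have mc: "mm A b (insert s (set ws)) \<in> cg_carrier A" using Cons.prems by (intro mm_c) auto
    have "cg_mul A (b s) (M A b (w # ws)) = cg_mul A (cg_mul A (b s) (b w)) (M A b ws)"
      using bs bw Mws by (simp add: mul_assoc)
    also have "\<dots> = cg_smult A (-1) (cg_mul A (b w) (cg_mul A (b s) (M A b ws)))"
      using deg1_anti[of "b s" "b w"] Cons.prems bs bw Mws by (simp add: mul_sm mul_assoc)
    also have "\<dots> = cg_smult A (- sig s (set ws)) (cg_mul A (b w) (mm A b (insert s (set ws))))"
      using ih mc bw by (simp add: mul_sm sm_sm)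
    also have "cg_mul A (b w) (mm A b (insert s (set ws))) = mm A b (insert w (insert s (set ws)))"
      using lt 3 by (intro mm_insert_min[symmetric]) auto
    also have "insert w (insert s (set ws)) = insert s (set (w # ws))" by auto
    also have "- sig s (set ws) = (sig s (set (w # ws)) :: 'k)"
    proof (cases "s \<in> set ws")
      case True then show ?thesis by (simp add: sig_def)
    next
      case False
      have "{y \<in> set (w # ws). y < s} = insert w {y \<in> set ws. y < s}" using 3 by auto
      moreover have "w \<notin> set ws" using Cons.prems by auto
      ultimately show ?thesis using False 3 by (simp add: sig_def)
    qed
    finally show ?thesis .
  qed
qed

lemma bm:
  assumes ch: "CHAR('k) \<noteq> 2" and "finite W" "b s \<in> cg_hom A 1" "\<forall>t\<in>W. b t \<in> cg_hom A 1"
  shows "cg_mul A (b s) (mm A b W) = cg_smult A (sig s W) (mm A b (insert s W))"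
  using bM[OF ch, where b=b and s=s and xs="sorted_list_of_set W"] assms by (simp add: mm_def)

lemma mm_mul_list:
  assumes ch: "CHAR('k) \<noteq> 2"
  shows "finite T \<Longrightarrow> \<forall>t\<in>set xs \<union> T. b t \<in> cg_hom A 1 \<Longrightarrow> sorted xs \<Longrightarrow> distinct xs \<Longrightarrow>
   cg_mul A (M A b xs) (mm A b T) = cg_smult A (kap (set xs) T) (mm A b (set xs \<union> T))"
proof (induction xs)
  case Nil
  have "mm A b T \<in> cg_carrier A" using Nil by (intro mm_c) auto
  then show ?case by (simp add: kap_def ext_sign_def)
next
  case (Cons x xs)
  have lt: "\<forall>y\<in>set xs. x < y" using Cons.prems(3,4) by (auto simp: le_less)
  have bx: "b x \<in> cg_carrier A" "b x \<in> cg_hom A 1" using Cons.prems hom_c by auto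
  have Mxs: "M A b xs \<in> cg_carrier A" using Cons.prems by (intro M_c) auto
  have mT: "mm A b T \<in> cg_carrier A" using Cons.prems by (intro mm_c) auto
  have mU: "mm A b (set xs \<union> T) \<in> cg_carrier A" using Cons.prems by (intro mm_c) auto
  have ih: "cg_mul A (M A b xs) (mm A b T) = cg_smult A (kap (set xs) T) (mm A b (set xs \<union> T))"
    using Cons by auto
  have "cg_mul A (M A b (x # xs)) (mm A b T) = cg_mul A (b x) (cg_mul A (M A b xs) (mm A b T))"
    using bx Mxs mT by (simp add: mul_assoc)
  also have "\<dots> = cg_smult A (kap (set xs) T) (cg_mul A (b x) (mm A b (set xs \<union> T)))"
    using ih bx mU by (simp add: mul_sm)
  also have "cg_mul A (b x) (mm A b (set xs \<union> T)) =
     cg_smult A (sig x (set xs \<union> T)) (mm A b (insert x (set xs \<union> T)))"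
    using Cons.prems by (intro bm[OF ch]) auto
  also have "cg_smult A (kap (set xs) T) (cg_smult A (sig x (set xs \<union> T)) (mm A b (insert x (set xs \<union> T))))
    = cg_smult A (kap (set (x # xs)) T) (mm A b (set (x # xs) \<union> T))"
  proof -
    have "mm A b (insert x (set xs \<union> T)) \<in> cg_carrier A" using Cons.prems by (intro mm_c) auto
    moreover have "kap (set (x # xs)) T = kap (set xs) T * (sig x (set xs \<union> T) :: 'k)"
      using kap_rec[of "set xs" T x] Cons.prems lt by auto
    ultimately show ?thesis by (simp add: sm_sm)
  qed
  finally show ?case .
qed

lemma mm_mul:
  assumes ch: "CHAR('k) \<noteq> 2" and "finite S" "finite T" "\<forall>t\<in>S \<union> T. b t \<in> cg_hom A 1"
  shows "cg_mul A (mm A b S) (mm A b T) = cg_smult A (kap S T) (mm A b (S \<union> T))"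
  using mm_mul_list[OF ch, where T=T and b=b and xs="sorted_list_of_set S"] assms by (simp add: mm_def)

end


locale ctx = ce I D for I :: "'i::linorder set" and D :: "('i set \<Rightarrow> 'k::field) \<Rightarrow> ('i set \<Rightarrow> 'k)" +
  fixes B :: "('b,'k) cdga"
  assumes cB: "cdga B"
begin

sublocale B: cd B by (rule cd.intro) (rule cB)

abbreviation "E \<equiv> ext_alg I D"

lemma EJ_supp: "c \<in> EJ I J \<Longrightarrow> finite {S. c S \<noteq> 0}"
  by (auto simp: EJ_def ext_carrier_def)

lemma EJ_supp2: "c \<in> EJ I J \<Longrightarrow> c S \<noteq> 0 \<Longrightarrow> finite S \<and> S \<subseteq> J \<and> S \<subseteq> I"
  by (auto simp: EJ_def ext_carrier_def)

lemma G_alt: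
  assumes c: "c \<in> EJ I J" and gd: "\<forall>t\<in>J. b t \<in> cg_hom B 1"
    and F: "finite F" "{S. c S \<noteq> 0} \<subseteq> F" "\<forall>S\<in>F. finite S \<and> S \<subseteq> J"
  shows "G B b c = finsum (RA B) (\<lambda>S. cg_smult B (c S) (mm B b S)) F"
proof -
  let ?\<phi> = "\<lambda>S. cg_smult B (c S) (mm B b S)"
  let ?P = "{S. c S \<noteq> 0}"
  have mc: "\<And>S. S \<in> F \<Longrightarrow> mm B b S \<in> cg_carrier B"
  proof -
    fix S assume "S \<in> F" then have "finite S" "S \<subseteq> J" using F by auto
    then show "mm B b S \<in> cg_carrier B" using B.mmJ_c gd by blast
  qed
  have pi: "?\<phi> \<in> F \<rightarrow> cg_carrier B" using mc by simp
  have fP: "finite ?P" using finite_subset[OF F(2) F(1)] .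
  have FP: "F = ?P \<union> (F - ?P)" using F by auto
  have "finsum (RA B) ?\<phi> (?P \<union> (F - ?P)) = cg_add B (finsum (RA B) ?\<phi> ?P) (finsum (RA B) ?\<phi> (F - ?P))"
    by (rule B.R.finsum_Un_disjoint) (use fP F(1) pi F(2) in auto)
  then have "finsum (RA B) ?\<phi> F = cg_add B (finsum (RA B) ?\<phi> ?P) (finsum (RA B) ?\<phi> (F - ?P))"
    using arg_cong[OF FP, of "finsum (RA B) ?\<phi>"] by (rule trans[rotated])
  moreover have "finsum (RA B) ?\<phi> (F - ?P) = finsum (RA B) (\<lambda>S. cg_zero B) (F - ?P)"
    by (rule B.R.finsum_cong) (use mc in auto)
  moreover have "finsum (RA B) ?\<phi> ?P \<in> cg_carrier B"
    using pi F by (intro B.R.finsum_closed) auto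
  ultimately show ?thesis by (simp add: G_def B.R.finsum_zero)
qed

lemma G_c: "c \<in> EJ I J \<Longrightarrow> \<forall>t\<in>J. b t \<in> cg_hom B 1 \<Longrightarrow> G B b c \<in> cg_carrier B"
  unfolding G_def
proof (rule B.R.finsum_closed)
  assume c: "c \<in> EJ I J" and gd: "\<forall>t\<in>J. b t \<in> cg_hom B 1"
  show "(\<lambda>S. cg_smult B (c S) (mm B b S)) \<in> {S. c S \<noteq> 0} \<rightarrow> cg_carrier B"
  proof
    fix S assume "S \<in> {S. c S \<noteq> 0}"
    then have "finite S" "S \<subseteq> J" using EJ_supp2[OF c] by auto
    then show "cg_smult B (c S) (mm B b S) \<in> cg_carrier B" using B.sm_c[OF B.mmJ_c[of S J b]] gd by blast
  qed
qed

lemma G_hom: assumes "c \<in> EJ I J" "c \<in> cg_hom E n" "\<forall>t\<in>J. b t \<in> cg_hom B 1"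
  shows "G B b c \<in> cg_hom B n"
  unfolding G_def
proof (rule B.hom_finsum)
  show "finite {S. c S \<noteq> 0}" using assms EJ_supp by blast
  show "(\<lambda>S. cg_smult B (c S) (mm B b S)) \<in> {S. c S \<noteq> 0} \<rightarrow> cg_hom B n"
  proof
    fix S assume "S \<in> {S. c S \<noteq> 0}"
    then have "finite S" "S \<subseteq> J" "card S = n" using assms EJ_supp2[of c J S] by auto
    then show "cg_smult B (c S) (mm B b S) \<in> cg_hom B n"
      using B.mmJ_hom[of S J b] assms(3) B.hom_sm by simp
  qed
qed

lemma G_add:
  assumes a: "a \<in> EJ I J" and c: "c \<in> EJ I J" and gd: "\<forall>t\<in>J. b t \<in> cg_hom B 1"
  shows "G B b (\<lambda>S. a S + c S) = cg_add B (G B b a) (G B b c)"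
proof -
  let ?F = "{S. a S \<noteq> 0} \<union> {S. c S \<noteq> 0}"
  have F1: "finite ?F" using EJ_supp[OF a] EJ_supp[OF c] by simp
  have F2: "\<forall>S\<in>?F. finite S \<and> S \<subseteq> J"
  proof
    fix S assume "S \<in> ?F"
    then show "finite S \<and> S \<subseteq> J" using EJ_supp2[OF a, of S] EJ_supp2[OF c, of S] by auto
  qed
  note F = F1 F2
  have ac: "(\<lambda>S. a S + c S) \<in> EJ I J" using EJ_add[OF a c] .
  have mc: "\<forall>S\<in>?F. mm B b S \<in> cg_carrier B"
  proof
    fix S assume "S \<in> ?F"
    then have "finite S" "S \<subseteq> J" using F(2) by auto
    then show "mm B b S \<in> cg_carrier B" using B.mmJ_c[of S J b] gd by blast
  qed
  have "G B b (\<lambda>S. a S + c S) = finsum (RA B) (\<lambda>S. cg_smult B (a S + c S) (mm B b S)) ?F"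
    by (rule G_alt[OF ac gd F(1) _ F(2)]) auto
  also have "\<dots> = finsum (RA B) (\<lambda>S. cg_add B (cg_smult B (a S) (mm B b S)) (cg_smult B (c S) (mm B b S))) ?F"
    by (rule B.R.finsum_cong) (use mc in \<open>auto simp: B.sm_addk\<close>)
  also have "\<dots> = cg_add B (finsum (RA B) (\<lambda>S. cg_smult B (a S) (mm B b S)) ?F)
      (finsum (RA B) (\<lambda>S. cg_smult B (c S) (mm B b S)) ?F)"
    by (rule B.R.finsum_addf) (use mc in auto)
  also have "finsum (RA B) (\<lambda>S. cg_smult B (a S) (mm B b S)) ?F = G B b a"
    by (rule G_alt[OF a gd F(1) _ F(2), symmetric]) auto
  also have "finsum (RA B) (\<lambda>S. cg_smult B (c S) (mm B b S)) ?F = G B b c"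
    by (rule G_alt[OF c gd F(1) _ F(2), symmetric]) auto
  finally show ?thesis .
qed

lemma G_sm:
  assumes a: "a \<in> EJ I J" and gd: "\<forall>t\<in>J. b t \<in> cg_hom B 1"
  shows "G B b (\<lambda>S. k * a S) = cg_smult B k (G B b a)"
proof -
  let ?F = "{S. a S \<noteq> 0}"
  have F1: "finite ?F" using EJ_supp[OF a] by simp
  have F2: "\<forall>S\<in>?F. finite S \<and> S \<subseteq> J"
  proof
    fix S assume "S \<in> ?F"
    then show "finite S \<and> S \<subseteq> J" using EJ_supp2[OF a, of S] by auto
  qed
  note F = F1 F2
  have mc: "\<forall>S\<in>?F. mm B b S \<in> cg_carrier B"
  proof
    fix S assume "S \<in> ?F"
    then have "finite S" "S \<subseteq> J" using F(2) by auto
    then show "mm B b S \<in> cg_carrier B" using B.mmJ_c[of S J b] gd by blast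
  qed
  have "G B b (\<lambda>S. k * a S) = finsum (RA B) (\<lambda>S. cg_smult B (k * a S) (mm B b S)) ?F"
    by (rule G_alt[OF EJ_sm[OF a] gd F(1) _ F(2)]) auto
  also have "\<dots> = finsum (RA B) (\<lambda>S. cg_smult B k (cg_smult B (a S) (mm B b S))) ?F"
    by (rule B.R.finsum_cong) (use mc in \<open>auto simp: B.sm_sm\<close>)
  also have "\<dots> = cg_smult B k (G B b a)"
    unfolding G_def by (rule B.sm_finsum[symmetric]) (use F mc in auto)
  finally show ?thesis .
qed

lemma G_zero: "G B b (\<lambda>S. 0) = cg_zero B"
  by (simp add: G_def B.R.finsum_empty)



lemma G_esing: assumes "finite S" "S \<subseteq> J" "\<forall>t\<in>J. b t \<in> cg_hom B 1"
  shows "G B b (esing S) = mm B b S"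
proof -
  have e: "{T. esing S T \<noteq> (0::'k)} = insert S {}" by (auto simp: esing_def)
  have m: "mm B b S \<in> cg_carrier B" using B.mmJ_c[of S J b] assms by blast
  have 1: "G B b (esing S) = finsum (RA B) (\<lambda>T. cg_smult B (esing S T) (mm B b T)) (insert S {})"
    by (simp only: G_def e)
  have 2: "finsum (RA B) (\<lambda>T. cg_smult B (esing S T) (mm B b T)) (insert S {}) = 
     cg_add B (cg_smult B (esing S S) (mm B b S)) (finsum (RA B) (\<lambda>T. cg_smult B (esing S T) (mm B b T)) {})"
    by (rule B.R.finsum_insert) (simp_all add: m)
  have 3: "esing S S = (1::'k)" by (simp add: esing_def)
  have 4: "finsum (RA B) (\<lambda>T. cg_smult B (esing S T) (mm B b T)) {} = cg_zero B"
    by (rule B.R.finsum_empty)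
  show ?thesis unfolding 1 2 3 4 using m by simp
qed

lemma G_lin:
  assumes gd: "\<forall>t\<in>J. b t \<in> cg_hom B 1" and "finite F" "\<phi> \<in> F \<rightarrow> EJ I J"
  shows "G B b (finsum (RA E) \<phi> F) = finsum (RA B) (\<lambda>i. G B b (\<phi> i)) F"
proof (rule lin_finsum[where h="G B b" and V="EJ I J", OF ce cB _ _ _ _ _ _ assms(2,3)])
  show "EJ I J \<subseteq> cg_carrier E" using EJ_c by auto
  show "cg_zero E \<in> EJ I J" by simp
  show "\<And>x y. x \<in> EJ I J \<Longrightarrow> y \<in> EJ I J \<Longrightarrow> cg_add E x y \<in> EJ I J" using EJ_add by simp
  show "\<And>x. x \<in> EJ I J \<Longrightarrow> G B b x \<in> cg_carrier B" using G_c gd by blast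
  show "G B b (cg_zero E) = cg_zero B" using G_zero by simp
  fix x y :: "'i set \<Rightarrow> 'k" assume xy: "x \<in> EJ I J" "y \<in> EJ I J"
  have "G B b (\<lambda>S. x S + y S) = cg_add B (G B b x) (G B b y)" by (rule G_add[OF xy gd])
  then show "G B b (cg_add E x y) = cg_add B (G B b x) (G B b y)" by (simp only: ext_alg_simps)
qed


lemma G_mul:
  assumes ch: "CHAR('k) \<noteq> 2" and a: "a \<in> EJ I J" and c: "c \<in> EJ I J"
    and gd: "\<forall>t\<in>J. b t \<in> cg_hom B 1" and JI: "J \<subseteq> I"
  shows "G B b (ext_mul a c) = cg_mul B (G B b a) (G B b c)"
proof -
  define Fa where "Fa = {S. a S \<noteq> 0}"
  define Fc where "Fc = {S. c S \<noteq> 0}"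
  define ea where "ea = (\<lambda>S. (\<lambda>U. a S * esing S U))"
  define ec where "ec = (\<lambda>S. (\<lambda>U. c S * esing S U))"
  have fa: "finite Fa" using EJ_supp[OF a] by (simp add: Fa_def)
  have fc: "finite Fc" using EJ_supp[OF c] by (simp add: Fc_def)
  have sa: "\<And>S. S \<in> Fa \<Longrightarrow> finite S \<and> S \<subseteq> J \<and> S \<subseteq> I" using EJ_supp2[OF a] by (simp add: Fa_def)
  have sc: "\<And>S. S \<in> Fc \<Longrightarrow> finite S \<and> S \<subseteq> J \<and> S \<subseteq> I" using EJ_supp2[OF c] by (simp add: Fc_def)
  have es: "\<And>S. finite S \<Longrightarrow> S \<subseteq> J \<Longrightarrow> (esing S :: 'i set \<Rightarrow> 'k) \<in> EJ I J"
    using JI by (intro EJ_esing) auto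
  have eaJ: "ea S \<in> EJ I J" if S: "S \<in> Fa" for S
  proof -
    have "finite S" "S \<subseteq> J" using sa[OF S] by auto
    then have "(esing S :: 'i set \<Rightarrow> 'k) \<in> EJ I J" by (rule es)
    then show ?thesis unfolding ea_def by (rule EJ_sm)
  qed
  have ecJ: "ec S \<in> EJ I J" if S: "S \<in> Fc" for S
  proof -
    have "finite S" "S \<subseteq> J" using sc[OF S] by auto
    then have "(esing S :: 'i set \<Rightarrow> 'k) \<in> EJ I J" by (rule es)
    then show ?thesis unfolding ec_def by (rule EJ_sm)
  qed
  have eaC: "ea \<in> Fa \<rightarrow> ext_carrier I" using EJ_c[OF eaJ] by (simp add: Pi_iff)
  have ecC: "ec \<in> Fc \<rightarrow> ext_carrier I" using EJ_c[OF ecJ] by (simp add: Pi_iff)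
  have adec: "a = finsum (RA E) ea Fa" unfolding ea_def Fa_def using E_decomp[OF EJ_c[OF a]] .
  have cdec: "c = finsum (RA E) ec Fc" unfolding ec_def Fc_def using E_decomp[OF EJ_c[OF c]] .
  have cC: "c \<in> cg_carrier E" using EJ_c[OF c] by simp
  have eaC': "ea \<in> Fa \<rightarrow> cg_carrier E" using eaC by simp
  have ecC': "ec \<in> Fc \<rightarrow> cg_carrier E" using ecC by simp
  have mS: "mm B b S \<in> cg_carrier B" if "S \<in> Fa" for S
    using sa[OF that] gd by (intro B.mmJ_c[of S J b]) auto
  have mT: "mm B b S \<in> cg_carrier B" if "S \<in> Fc" for S
    using sc[OF that] gd by (intro B.mmJ_c[of S J b]) auto
  have key: "G B b (ext_mul (ea S) (ec T)) =
      cg_smult B (a S) (cg_smult B (c T) (cg_mul B (mm B b S) (mm B b T)))"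
    if S: "S \<in> Fa" and T: "T \<in> Fc" for S T
  proof -
    have fS: "finite S" "S \<subseteq> J" using sa[OF S] by auto
    have fT: "finite T" "T \<subseteq> J" using sc[OF T] by auto
    have eS: "(esing S :: 'i set \<Rightarrow> 'k) \<in> ext_carrier I" "(esing T :: 'i set \<Rightarrow> 'k) \<in> ext_carrier I" using es[OF fS] es[OF fT] EJ_c by auto
    have m1: "ext_mul (ea S) (ec T) = (\<lambda>U. a S * ext_mul (esing S) (ec T) U)"
      using E.mul_sm(1)[of "esing S" "ec T" "a S"] eS ecC T unfolding ea_def by auto
    have m2: "ext_mul (esing S) (ec T) = (\<lambda>U. c T * ext_mul (esing S) (esing T) U)"
      using E.mul_sm(2)[of "esing S" "esing T" "c T"] eS unfolding ec_def by auto
    have e3: "(esing (S \<union> T) :: 'i set \<Rightarrow> 'k) \<in> EJ I J" using es fS fT by auto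
    have e2: "(\<lambda>U. (kap S T :: 'k) * esing (S \<union> T) U) \<in> EJ I J" using EJ_sm[OF e3] .
    have e1: "(\<lambda>U. c T * ((kap S T :: 'k) * esing (S \<union> T) U)) \<in> EJ I J" using EJ_sm[OF e2] .
    have "G B b (ext_mul (ea S) (ec T)) = G B b (\<lambda>U. a S * (c T * (kap S T * esing (S \<union> T) U)))"
    proof -
      have em: "ext_mul (esing S) (esing T) = (\<lambda>U. (kap S T::'k) * esing (S \<union> T) U)"
        by (rule esing_mul[OF fS(1) fT(1)])
      show ?thesis using m1 m2 em by simp
    qed
    also have "\<dots> = cg_smult B (a S) (G B b (\<lambda>U. c T * (kap S T * esing (S \<union> T) U)))"
      using G_sm[OF e1 gd] .
    also have "G B b (\<lambda>U. c T * (kap S T * esing (S \<union> T) U)) =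
       cg_smult B (c T) (G B b (\<lambda>U. kap S T * esing (S \<union> T) U))"
      using G_sm[OF e2 gd] .
    also have "G B b (\<lambda>U. kap S T * esing (S \<union> T) U) = cg_smult B (kap S T) (G B b (esing (S \<union> T)))"
      using G_sm[OF e3 gd] .
    also have "G B b (esing (S \<union> T)) = mm B b (S \<union> T)"
      using G_esing[of "S \<union> T" J b] fS fT gd by auto
    also have "cg_smult B (kap S T) (mm B b (S \<union> T)) = cg_mul B (mm B b S) (mm B b T)"
    proof -
      have "\<forall>t\<in>S \<union> T. b t \<in> cg_hom B 1" using fS fT gd by auto
      then show ?thesis using B.mm_mul[OF ch fS(1) fT(1), of b] by simp
    qed
    finally show ?thesis .
  qed
  have mulJ: "\<And>S T. S \<in> Fa \<Longrightarrow> T \<in> Fc \<Longrightarrow> ext_mul (ea S) (ec T) \<in> EJ I J"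
    by (rule EJ_mul[OF eaJ ecJ])
  have mulJ2: "\<And>S. S \<in> Fa \<Longrightarrow> ext_mul (ea S) c \<in> EJ I J"
    by (rule EJ_mul[OF eaJ c])
  have "ext_mul a c = finsum (RA E) (\<lambda>S. ext_mul (ea S) c) Fa"
    using E.R.finsum_ldistr[OF fa cC eaC'] adec by simp
  then have "G B b (ext_mul a c) = finsum (RA B) (\<lambda>S. G B b (ext_mul (ea S) c)) Fa"
    using G_lin[OF gd fa, of "\<lambda>S. ext_mul (ea S) c"] mulJ2 by simp
  also have "\<dots> = finsum (RA B) (\<lambda>S. finsum (RA B) (\<lambda>T. cg_smult B (a S) (cg_smult B (c T)
        (cg_mul B (mm B b S) (mm B b T)))) Fc) Fa"
  proof (rule B.R.finsum_cong')
    show "Fa = Fa" ..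
    show "(\<lambda>S. finsum (RA B) (\<lambda>T. cg_smult B (a S) (cg_smult B (c T)
        (cg_mul B (mm B b S) (mm B b T)))) Fc) \<in> Fa \<rightarrow> cg_carrier B"
      by (rule Pi_I, rule B.R.finsum_closed) (use mS mT in \<open>auto simp: Pi_iff\<close>)
  next
    fix S assume S: "S \<in> Fa"
    have "ext_mul (ea S) c = finsum (RA E) (\<lambda>T. ext_mul (ea S) (ec T)) Fc"
      using E.R.finsum_rdistr[OF fc _ ecC', of "ea S"] cdec eaC' S by auto
    then have "G B b (ext_mul (ea S) c) = finsum (RA B) (\<lambda>T. G B b (ext_mul (ea S) (ec T))) Fc"
      using G_lin[OF gd fc, of "\<lambda>T. ext_mul (ea S) (ec T)"] mulJ S by simp
    also have "\<dots> = finsum (RA B) (\<lambda>T. cg_smult B (a S) (cg_smult B (c T)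
        (cg_mul B (mm B b S) (mm B b T)))) Fc"
      by (rule B.R.finsum_cong) (use key S mS mT in auto)
    finally show "G B b (ext_mul (ea S) c) = finsum (RA B) (\<lambda>T. cg_smult B (a S) (cg_smult B (c T)
        (cg_mul B (mm B b S) (mm B b T)))) Fc" .
  qed
  also have "\<dots> = cg_mul B (G B b a) (G B b c)"
  proof -
    have Ga: "G B b a = finsum (RA B) (\<lambda>S. cg_smult B (a S) (mm B b S)) Fa" by (simp add: G_def Fa_def)
    have Gc: "G B b c = finsum (RA B) (\<lambda>S. cg_smult B (c S) (mm B b S)) Fc" by (simp add: G_def Fc_def)
    have GcC: "G B b c \<in> cg_carrier B" using G_c[OF c gd] .
    have "cg_mul B (G B b a) (G B b c) = finsum (RA B) (\<lambda>S. cg_mul B (cg_smult B (a S) (mm B b S)) (G B b c)) Fa"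
      unfolding Ga using B.R.finsum_ldistr[OF fa GcC, of "\<lambda>S. cg_smult B (a S) (mm B b S)"] mS by auto
    also have "\<dots> = finsum (RA B) (\<lambda>S. finsum (RA B) (\<lambda>T. cg_smult B (a S) (cg_smult B (c T)
        (cg_mul B (mm B b S) (mm B b T)))) Fc) Fa"
    proof (rule B.R.finsum_cong')
      show "Fa = Fa" ..
      show "(\<lambda>S. finsum (RA B) (\<lambda>T. cg_smult B (a S) (cg_smult B (c T)
        (cg_mul B (mm B b S) (mm B b T)))) Fc) \<in> Fa \<rightarrow> cg_carrier B"
        by (rule Pi_I, rule B.R.finsum_closed) (use mS mT in \<open>auto simp: Pi_iff\<close>)
    next
      fix S assume S: "S \<in> Fa"
      have "cg_mul B (cg_smult B (a S) (mm B b S)) (G B b c) =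
          finsum (RA B) (\<lambda>T. cg_mul B (cg_smult B (a S) (mm B b S)) (cg_smult B (c T) (mm B b T))) Fc"
        unfolding Gc using B.R.finsum_rdistr[OF fc _, of "cg_smult B (a S) (mm B b S)"
            "\<lambda>T. cg_smult B (c T) (mm B b T)"] mS[OF S] mT by auto
      also have "\<dots> = finsum (RA B) (\<lambda>T. cg_smult B (a S) (cg_smult B (c T)
        (cg_mul B (mm B b S) (mm B b T)))) Fc"
        by (rule B.R.finsum_cong) (use mS[OF S] mT in \<open>auto simp: B.mul_sm B.sm_sm mult.commute\<close>)
      finally show "cg_mul B (cg_smult B (a S) (mm B b S)) (G B b c) = finsum (RA B) (\<lambda>T. cg_smult B (a S) (cg_smult B (c T)
        (cg_mul B (mm B b S) (mm B b T)))) Fc" .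
    qed
    finally show ?thesis by simp
  qed
  finally show ?thesis .
qed


lemma esing_ins:
  assumes "finite X" "\<forall>y\<in>X. x < y"
  shows "ext_mul (esing {x}) (esing X) = (esing (insert x X) :: 'i set \<Rightarrow> 'k)"
proof -
  have "x \<notin> X" using assms by auto
  moreover have e: "{(s, t). s \<in> {x} \<and> t \<in> X \<and> t < s} = {}" using assms by auto
  moreover have "ext_sign {x} X = (1::'k)" unfolding ext_sign_def e by simp
  ultimately have k1: "kap {x} X = (1::'k)" by (simp add: kap_def)
  have m: "ext_mul (esing {x}) (esing X) = (\<lambda>U. (kap {x} X::'k) * esing ({x} \<union> X) U)"
    by (rule esing_mul) (use assms in auto)
  show ?thesis unfolding m k1 by simp
qed

end

lemma cdga_homD:
  assumes "cdga_hom A B h"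
  shows "x \<in> cg_carrier A \<Longrightarrow> h x \<in> cg_carrier B"
    and "x \<in> cg_hom A i \<Longrightarrow> h x \<in> cg_hom B i"
    and "x \<in> cg_carrier A \<Longrightarrow> y \<in> cg_carrier A \<Longrightarrow> h (cg_add A x y) = cg_add B (h x) (h y)"
    and "x \<in> cg_carrier A \<Longrightarrow> h (cg_smult A a x) = cg_smult B a (h x)"
    and "x \<in> cg_carrier A \<Longrightarrow> y \<in> cg_carrier A \<Longrightarrow> h (cg_mul A x y) = cg_mul B (h x) (h y)"
    and "h (cg_one A) = cg_one B"
    and "x \<in> cg_carrier A \<Longrightarrow> h (cg_diff A x) = cg_diff B (h x)"
  using assms unfolding cdga_hom_def by blast+

lemma hom_zero:
  assumes "cdga A" "cdga B" "cdga_hom A B h"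
  shows "h (cg_zero A) = cg_zero B"
proof -
  interpret a: cd A by (rule cd.intro) fact
  interpret b: cd B by (rule cd.intro) fact
  have "h (cg_zero A) = h (cg_smult A 0 (cg_zero A))" by simp
  also have "\<dots> = cg_smult B 0 (h (cg_zero A))" using cdga_homD(4)[OF assms(3) a.zero_c, of 0] .
  also have "\<dots> = cg_zero B" using cdga_homD(1)[OF assms(3)] by simp
  finally show ?thesis .
qed

lemma hom_finsum:
  assumes "cdga A" "cdga B" "cdga_hom A B h" "finite F" "\<phi> \<in> F \<rightarrow> cg_carrier A"
  shows "h (finsum (RA A) \<phi> F) = finsum (RA B) (\<lambda>i. h (\<phi> i)) F"
proof -
  interpret a: cd A by (rule cd.intro) fact
  show ?thesis
    by (rule lin_finsum[where h=h and V="cg_carrier A", OF assms(1,2) _ _ _ _ _ _ assms(4,5)])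
       (use cdga_homD[OF assms(3)] hom_zero[OF assms(1-3)] in auto)
qed

lemma d_finsum:
  assumes "cdga A" "finite F" "\<phi> \<in> F \<rightarrow> cg_carrier A"
  shows "cg_diff A (finsum (RA A) \<phi> F) = finsum (RA A) (\<lambda>i. cg_diff A (\<phi> i)) F"
proof -
  interpret a: cd A by (rule cd.intro) fact
  show ?thesis
    by (rule lin_finsum[where h="cg_diff A" and V="cg_carrier A", OF assms(1,1) _ _ _ _ _ _ assms(2,3)])
       (auto simp: a.d_add)
qed

locale ctx2 = ctx I D B for I :: "'i::linorder set" and D :: "('i set \<Rightarrow> 'k::field) \<Rightarrow> ('i set \<Rightarrow> 'k)"
  and B :: "('b,'k) cdga" +
  fixes A :: "('a,'k) cdga" and f :: "('i set \<Rightarrow> 'k) \<Rightarrow> 'a" and \<psi> :: "'b \<Rightarrow> 'a"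
  assumes cA: "cdga A" and hf: "cdga_hom (ext_alg I D) A f" and h\<psi>: "cdga_hom B A \<psi>"
begin

sublocale A: cd A by (rule cd.intro) (rule cA)

definition good :: "'i set \<Rightarrow> ('i \<Rightarrow> 'b) \<Rightarrow> bool" where
  "good J b \<longleftrightarrow> (\<forall>t\<in>J. b t \<in> cg_hom B 1 \<and> \<psi> (b t) = f (esing {t}) \<and>
      cg_diff B (b t) = G B b (D (esing {t})) \<and> D (esing {t}) \<in> EJ I J)"

lemma mono_ind:
  assumes ch: "CHAR('k) \<noteq> 2" and JI: "J \<subseteq> I" and gd: "good J b"
  shows "sorted xs \<Longrightarrow> distinct xs \<Longrightarrow> set xs \<subseteq> J \<Longrightarrow>
    D (esing (set xs)) \<in> EJ I J \<and> G B b (D (esing (set xs))) = cg_diff B (mm B b (set xs)) \<and>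
    \<psi> (mm B b (set xs)) = f (esing (set xs))"
proof (induction xs)
  case Nil
  have "D (esing {}) = (\<lambda>S. 0)" using E.d_one by simp
  moreover have "mm B b {} = cg_one B" by (simp add: mm_def)
  moreover have "\<psi> (cg_one B) = cg_one A" using cdga_homD(6)[OF h\<psi>] .
  moreover have "f (esing {}) = cg_one A" using cdga_homD(6)[OF hf] by simp
  ultimately show ?case by (simp add: G_zero)
next
  case (Cons x xs)
  let ?X = "set xs"
  have gd1: "\<forall>t\<in>J. b t \<in> cg_hom B 1" using gd by (simp add: good_def)
  have lt: "\<forall>y\<in>?X. x < y" using Cons.prems by (auto simp: le_less)
  have xJ: "x \<in> J" and XJ: "?X \<subseteq> J" using Cons.prems by auto
  have ih: "D (esing ?X) \<in> EJ I J" "G B b (D (esing ?X)) = cg_diff B (mm B b ?X)"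
     "\<psi> (mm B b ?X) = f (esing ?X)" using Cons by auto
  have bx: "b x \<in> cg_hom B 1" "\<psi> (b x) = f (esing {x})" "cg_diff B (b x) = G B b (D (esing {x}))"
     "D (esing {x}) \<in> EJ I J" using gd xJ by (auto simp: good_def)
  have bxC: "b x \<in> cg_carrier B" using bx(1) B.hom_c by blast
  have ex: "(esing {x} :: 'i set \<Rightarrow> 'k) \<in> EJ I J" using xJ JI by (intro EJ_esing) auto
  have exh: "(esing {x} :: 'i set \<Rightarrow> 'k) \<in> cg_hom E 1" using esing_hom[of "{x}" I D] xJ JI by auto
  have eX: "(esing ?X :: 'i set \<Rightarrow> 'k) \<in> EJ I J" using XJ JI by (intro EJ_esing) auto
  have exC: "(esing {x} :: 'i set \<Rightarrow> 'k) \<in> ext_carrier I" using EJ_c[OF ex] .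
  have eXC: "(esing ?X :: 'i set \<Rightarrow> 'k) \<in> ext_carrier I" using EJ_c[OF eX] .
  have mX: "mm B b ?X \<in> cg_carrier B" using XJ gd1 by (intro B.mmJ_c[of ?X J b]) auto
  have mX1: "mm B b (insert x ?X) = cg_mul B (b x) (mm B b ?X)"
    using lt by (intro mm_insert_min) auto
  have es0: "(esing (insert x ?X) :: 'i set \<Rightarrow> 'k) = ext_mul (esing {x}) (esing ?X)"
    by (rule esing_ins[symmetric]) (use lt in auto)
  then have es: "(esing (set (x # xs)) :: 'i set \<Rightarrow> 'k) = ext_mul (esing {x}) (esing ?X)" by simp
  have Dx: "D (esing (set (x # xs))) =
      (\<lambda>S. ext_mul (D (esing {x})) (esing ?X) S + (-1) * ext_mul (esing {x}) (D (esing ?X)) S)"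
    using E.leib[OF exh, of "esing ?X"] eXC es by simp
  have DJ: "D (esing (set (x # xs))) \<in> EJ I J"
    unfolding Dx by (intro EJ_add EJ_mul EJ_sm bx(4) eX ex ih(1))
  have Gx: "G B b (esing {x}) = b x"
  proof -
    have "G B b (esing {x}) = mm B b {x}" using G_esing[of "{x}" J b] xJ gd1 by auto
    also have "\<dots> = cg_mul B (b x) (cg_one B)" using mm_insert_min[of "{}" x B b] by (simp add: mm_def)
    finally show ?thesis using bxC by simp
  qed
  have GX: "G B b (esing ?X) = mm B b ?X" using G_esing[of ?X J b] XJ gd1 by auto
  have "G B b (D (esing (set (x # xs)))) =
     cg_add B (G B b (ext_mul (D (esing {x})) (esing ?X)))
              (G B b (\<lambda>S. (-1) * ext_mul (esing {x}) (D (esing ?X)) S))"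
    unfolding Dx by (rule G_add[OF _ _ gd1]) (intro EJ_mul EJ_sm bx(4) eX ex ih(1))+
  also have "G B b (\<lambda>S. (-1) * ext_mul (esing {x}) (D (esing ?X)) S) =
      cg_smult B (-1) (G B b (ext_mul (esing {x}) (D (esing ?X))))"
    by (rule G_sm[OF _ gd1]) (intro EJ_mul ex ih(1))
  also have "G B b (ext_mul (esing {x}) (D (esing ?X))) = cg_mul B (b x) (cg_diff B (mm B b ?X))"
    using G_mul[OF ch ex ih(1) gd1 JI] Gx ih(2) by simp
  also have "G B b (ext_mul (D (esing {x})) (esing ?X)) = cg_mul B (cg_diff B (b x)) (mm B b ?X)"
    using G_mul[OF ch bx(4) eX gd1 JI] bx(3) GX by simp
  also have "cg_add B (cg_mul B (cg_diff B (b x)) (mm B b ?X)) (cg_smult B (-1) (cg_mul B (b x) (cg_diff B (mm B b ?X))))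
      = cg_diff B (mm B b (set (x # xs)))"
    using B.leib[OF bx(1) mX] mX1 by simp
  finally have G2: "G B b (D (esing (set (x # xs)))) = cg_diff B (mm B b (set (x # xs)))" .
  have "\<psi> (mm B b (set (x # xs))) = cg_mul A (\<psi> (b x)) (\<psi> (mm B b ?X))"
    using mX1 cdga_homD(5)[OF h\<psi> bxC mX] by simp
  also have "\<dots> = cg_mul A (f (esing {x})) (f (esing ?X))" using bx(2) ih(3) by simp
  also have "\<dots> = f (esing (set (x # xs)))" using cdga_homD(5)[OF hf, of "esing {x}" "esing ?X"] exC eXC es by simp
  finally show ?case using DJ G2 by simp
qed


lemma main_lin:
  assumes ch: "CHAR('k) \<noteq> 2" and JI: "J \<subseteq> I" and gd: "good J b" and c: "c \<in> EJ I J"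
  shows "D c \<in> EJ I J \<and> G B b (D c) = cg_diff B (G B b c) \<and> \<psi> (G B b c) = f c"
proof -
  have gd1: "\<forall>t\<in>J. b t \<in> cg_hom B 1" using gd by (simp add: good_def)
  define Fc where "Fc = {S. c S \<noteq> 0}"
  define ec where "ec = (\<lambda>S. (\<lambda>U. c S * esing S U))"
  have fc: "finite Fc" using EJ_supp[OF c] by (simp add: Fc_def)
  have sc: "\<And>S. S \<in> Fc \<Longrightarrow> finite S \<and> S \<subseteq> J \<and> S \<subseteq> I" using EJ_supp2[OF c] by (simp add: Fc_def)
  have mono: "D (esing S) \<in> EJ I J \<and> G B b (D (esing S)) = cg_diff B (mm B b S) \<and>
    \<psi> (mm B b S) = f (esing S)" if S: "S \<in> Fc" for S
  proof -
    have fS: "finite S" "S \<subseteq> J" using sc[OF S] by auto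
    then show ?thesis using mono_ind[OF ch JI gd, of "sorted_list_of_set S"] by simp
  qed
  have esJ: "(esing S :: 'i set \<Rightarrow> 'k) \<in> EJ I J" if S: "S \<in> Fc" for S
    using sc[OF S] JI by (intro EJ_esing) auto
  have ecJ: "ec S \<in> EJ I J" if S: "S \<in> Fc" for S
    unfolding ec_def by (rule EJ_sm[OF esJ[OF S]])
  have ecC: "ec \<in> Fc \<rightarrow> cg_carrier E" using EJ_c[OF ecJ] by (simp add: Pi_iff)
  have cdec: "c = finsum (RA E) ec Fc" unfolding ec_def Fc_def using E_decomp[OF EJ_c[OF c]] .
  have mS: "mm B b S \<in> cg_carrier B" if "S \<in> Fc" for S
    using sc[OF that] gd1 by (intro B.mmJ_c[of S J b]) auto
  have Dec: "D (ec S) = (\<lambda>U. c S * D (esing S) U)" if S: "S \<in> Fc" for S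
    using E.d_sm[of "esing S" "c S"] EJ_c[OF esJ[OF S]] unfolding ec_def by simp
  have DecJ: "D (ec S) \<in> EJ I J" if S: "S \<in> Fc" for S
    unfolding Dec[OF S] by (rule EJ_sm) (use mono[OF S] in simp)
  have Dc: "D c = finsum (RA E) (\<lambda>S. D (ec S)) Fc"
    using d_finsum[OF ce fc ecC] cdec by simp
  have 1: "D c \<in> EJ I J" unfolding Dc by (rule EJ_fin[OF fc]) (use DecJ in \<open>simp add: Pi_iff\<close>)
  have Gc: "G B b c = finsum (RA B) (\<lambda>S. cg_smult B (c S) (mm B b S)) Fc"
    by (simp add: G_def Fc_def)
  have smC: "(\<lambda>S. cg_smult B (c S) (mm B b S)) \<in> Fc \<rightarrow> cg_carrier B" using mS by (simp add: Pi_iff)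
  have "G B b (D c) = finsum (RA B) (\<lambda>S. G B b (D (ec S))) Fc"
    unfolding Dc by (rule G_lin[OF gd1 fc]) (use DecJ in \<open>simp add: Pi_iff\<close>)
  also have "\<dots> = finsum (RA B) (\<lambda>S. cg_diff B (cg_smult B (c S) (mm B b S))) Fc"
  proof (rule B.R.finsum_cong')
    show "Fc = Fc" ..
    show "(\<lambda>S. cg_diff B (cg_smult B (c S) (mm B b S))) \<in> Fc \<rightarrow> cg_carrier B"
      using mS by (simp add: Pi_iff)
  next
    fix S assume S: "S \<in> Fc"
    have "G B b (D (ec S)) = cg_smult B (c S) (G B b (D (esing S)))"
      unfolding Dec[OF S] by (rule G_sm[OF _ gd1]) (use mono[OF S] in simp)
    then show "G B b (D (ec S)) = cg_diff B (cg_smult B (c S) (mm B b S))"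
      using mono[OF S] mS[OF S] B.d_sm by simp
  qed
  also have "\<dots> = cg_diff B (G B b c)"
    unfolding Gc by (rule d_finsum[OF cB fc smC, symmetric])
  finally have 2: "G B b (D c) = cg_diff B (G B b c)" .
  have "\<psi> (G B b c) = finsum (RA A) (\<lambda>S. \<psi> (cg_smult B (c S) (mm B b S))) Fc"
    unfolding Gc by (rule hom_finsum[OF cB cA h\<psi> fc smC])
  also have "\<dots> = finsum (RA A) (\<lambda>S. f (ec S)) Fc"
  proof (rule A.R.finsum_cong')
    show "Fc = Fc" ..
    show "(\<lambda>S. f (ec S)) \<in> Fc \<rightarrow> cg_carrier A"
      using cdga_homD(1)[OF hf] ecC by (auto simp: Pi_iff)
  next
    fix S assume S: "S \<in> Fc"
    have "f (ec S) = cg_smult A (c S) (f (esing S))"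
      using cdga_homD(4)[OF hf, of "esing S" "c S"] EJ_c[OF esJ[OF S]] unfolding ec_def by simp
    then show "\<psi> (cg_smult B (c S) (mm B b S)) = f (ec S)"
      using cdga_homD(4)[OF h\<psi> mS[OF S], of "c S"] mono[OF S] by simp
  qed
  also have "\<dots> = f c"
    using hom_finsum[OF ce cA hf fc ecC] cdec by simp
  finally have 3: "\<psi> (G B b c) = f c" .
  show ?thesis using 1 2 3 by simp
qed


lemma G_cong:
  assumes c: "c \<in> EJ I J" and eq: "\<forall>t\<in>J. h t = h' t" and gd: "\<forall>t\<in>J. h' t \<in> cg_hom B 1"
  shows "G B h c = G B h' c"
  unfolding G_def
proof (rule B.R.finsum_cong')
  show "{S. c S \<noteq> 0} = {S. c S \<noteq> 0}" ..
  show "(\<lambda>S. cg_smult B (c S) (mm B h' S)) \<in> {S. c S \<noteq> 0} \<rightarrow> cg_carrier B"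
  proof
    fix S assume "S \<in> {S. c S \<noteq> 0}"
    then have "finite S" "S \<subseteq> J" using EJ_supp2[OF c, of S] by auto
    then show "cg_smult B (c S) (mm B h' S) \<in> cg_carrier B"
      using gd by (intro B.sm_c B.mmJ_c[of S J h']) auto
  qed
next
  fix S assume "S \<in> {S. c S \<noteq> 0}"
  then have "finite S" "S \<subseteq> J" using EJ_supp2[OF c, of S] by auto
  then have "mm B h S = mm B h' S" using eq by (intro mm_cong) auto
  then show "cg_smult B (c S) (mm B h S) = cg_smult B (c S) (mm B h' S)" by simp
qed

lemma good_mono: "good J b \<Longrightarrow> J' \<subseteq> J \<Longrightarrow> (\<forall>t\<in>J'. D (esing {t}) \<in> EJ I J') \<Longrightarrow> good J' b"
  unfolding good_def by auto

lemma EJ_mono: "c \<in> EJ I J \<Longrightarrow> J \<subseteq> J' \<Longrightarrow> c \<in> EJ I J'"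
  unfolding EJ_def by auto

end

lemma hom_sub: "cdga A \<Longrightarrow> cdga B \<Longrightarrow> cdga_hom A B h \<Longrightarrow> x \<in> cg_carrier A \<Longrightarrow> y \<in> cg_carrier A \<Longrightarrow>
  h (cg_sub A x y) = cg_sub B (h x) (h y)"
  unfolding cg_sub_def using cdga_homD(3,4) cd.sm_c[OF cd.intro] by metis

context cd
begin

lemma sub_c[simp]: "x \<in> cg_carrier A \<Longrightarrow> y \<in> cg_carrier A \<Longrightarrow> cg_sub A x y \<in> cg_carrier A"
  by (simp add: cg_sub_def)

lemma hom_sub[simp]: "x \<in> cg_hom A i \<Longrightarrow> y \<in> cg_hom A i \<Longrightarrow> cg_sub A x y \<in> cg_hom A i"
  by (simp add: cg_sub_def)

lemma d_sub: "x \<in> cg_carrier A \<Longrightarrow> y \<in> cg_carrier A \<Longrightarrow>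
   cg_diff A (cg_sub A x y) = cg_sub A (cg_diff A x) (cg_diff A y)"
  by (simp add: cg_sub_def d_add d_sm)

lemma sub_zero_iff: "x \<in> cg_carrier A \<Longrightarrow> y \<in> cg_carrier A \<Longrightarrow> (cg_sub A x y = cg_zero A) \<longleftrightarrow> x = y"
  unfolding cg_sub_def using sub_eq[of x y "cg_zero A"] by simp

lemma sub_zero_r[simp]: "x \<in> cg_carrier A \<Longrightarrow> cg_sub A x (cg_zero A) = x"
  by (simp add: cg_sub_def)

lemma cob1_zero: assumes "cg_connected A" "coboundary A 1 v" shows "v = cg_zero A"
proof -
  have "v = cg_zero A \<or> (\<exists>y. y \<in> cg_hom A 0 \<and> v = cg_diff A y)"
    using assms(2) unfolding coboundary_def by auto
  moreover have "cg_diff A y = cg_zero A" if "y \<in> cg_hom A 0" for y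
  proof -
    have "y \<in> range (\<lambda>c. cg_smult A c (cg_one A))" using that assms(1) unfolding cg_connected_def by simp
    then obtain c where "y = cg_smult A c (cg_one A)" by auto
    then show ?thesis by (simp add: d_sm)
  qed
  ultimately show ?thesis by auto
qed

end


theorem theoremA2:
  fixes I :: "'i::wellorder set"
    and D :: "('i set \<Rightarrow> 'k::field) \<Rightarrow> ('i set \<Rightarrow> 'k)"
    and A :: "('a, 'k) cdga" and B :: "('b, 'k) cdga"
    and f :: "('i set \<Rightarrow> 'k) \<Rightarrow> 'a" and \<psi> :: "'b \<Rightarrow> 'a"
  assumes "CHAR('k) \<noteq> 2"
    and "minimal_deg1 I D"
    and "cdga A" and "cdga B" and "cg_connected A"
    and "cdga_hom (ext_alg I D) A f"
    and "quasi_iso B A \<psi>"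
  shows "\<exists>g. cdga_hom (ext_alg I D) B g \<and>
             (\<forall>x\<in>cg_carrier (ext_alg I D). \<psi> (g x) = f x) \<and>
             (quasi_iso (ext_alg I D) A f \<longrightarrow> quasi_iso (ext_alg I D) B g)"
proof -
  note ch = assms(1)
  have ce: "cdga (ext_alg I D)" using assms(2) by (simp add: minimal_deg1_def)
  have sub: "\<forall>\<tau>\<in>I. D (ext_gen \<tau>) \<in> subalg (ext_alg I D) (ext_gen ` {\<mu>\<in>I. \<mu> < \<tau>})"
    using assms(2) by (simp add: minimal_deg1_def)
  have hpsi: "cdga_hom B A \<psi>" using assms(7) by (simp add: quasi_iso_def)
  have qpsi: "\<And>i z. cocycle B i z \<Longrightarrow> coboundary A i (\<psi> z) \<Longrightarrow> coboundary B i z"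
    "\<And>i w. cocycle A i w \<Longrightarrow> \<exists>z. cocycle B i z \<and> coboundary A i (cg_sub A (\<psi> z) w)"
    using assms(7) unfolding quasi_iso_def by blast+
  interpret X: ctx2 I D B A f \<psi>
    by unfold_locales (auto intro: ce assms hpsi)
  define Jt where "Jt = (\<lambda>\<tau>. {\<mu>\<in>I. \<mu> < \<tau>})"
  have eC: "(esing {\<tau>} :: 'i set \<Rightarrow> 'k) \<in> ext_carrier I" if "\<tau> \<in> I" for \<tau>
    using that by (intro esing_c) auto
  have eH: "(esing {\<tau>} :: 'i set \<Rightarrow> 'k) \<in> cg_hom (ext_alg I D) 1" if "\<tau> \<in> I" for \<tau>
    using esing_hom[of "{\<tau>}" I D] that by simp
  have DJ: "D (esing {\<tau>}) \<in> EJ I (Jt \<tau>)" if \<tau>: "\<tau> \<in> I" for \<tau>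
  proof -
    have "D (esing {\<tau>}) \<in> ext_carrier I" using X.E.d_c[of "esing {\<tau>}"] eC[OF \<tau>] by simp
    moreover have "\<forall>S. D (esing {\<tau>}) S \<noteq> 0 \<longrightarrow> S \<subseteq> Jt \<tau>"
      using subalg_supp[of "D (esing {\<tau>})" I D "{\<mu>\<in>I. \<mu> < \<tau>}"] sub \<tau>
      by (simp add: ext_gen_esing Jt_def)
    ultimately show ?thesis by (simp add: EJ_def)
  qed
  define R where "R = {(x::'i, y). x < y}"
  have wfR: "wf R" unfolding R_def by (rule wellorder_class.wf)
  define H where "H = (\<lambda>(h::'i \<Rightarrow> 'b) \<tau>. SOME \<beta>. \<beta> \<in> cg_hom B 1 \<and> \<psi> \<beta> = f (esing {\<tau>}) \<and>
      cg_diff B \<beta> = G B h (D (esing {\<tau>})))"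
  define b where "b = wfrec R H"
  have brec: "b \<tau> = H (cut b R \<tau>) \<tau>" for \<tau>
    by (rule def_wfrec[OF b_def[THEN eq_reflection] wfR])
  have Q: "b \<tau> \<in> cg_hom B 1 \<and> \<psi> (b \<tau>) = f (esing {\<tau>}) \<and> cg_diff B (b \<tau>) = G B b (D (esing {\<tau>}))"
    if "\<tau> \<in> I" for \<tau>
    using that
  proof (induction \<tau> rule: less_induct)
    case (less \<tau>)
    let ?J = "Jt \<tau>"
    have JI: "?J \<subseteq> I" by (auto simp: Jt_def)
    have gdJ: "X.good ?J b"
      unfolding X.good_def
    proof
      fix t assume t: "t \<in> ?J"
      then have tI: "t \<in> I" "t < \<tau>" by (auto simp: Jt_def)
      have "Jt t \<subseteq> ?J" using tI by (auto simp: Jt_def)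
      then have "D (esing {t}) \<in> EJ I ?J" using X.EJ_mono[OF DJ[OF tI(1)]] by blast
      then show "b t \<in> cg_hom B 1 \<and> \<psi> (b t) = f (esing {t}) \<and>
          cg_diff B (b t) = G B b (D (esing {t})) \<and> D (esing {t}) \<in> EJ I ?J"
        using less.IH[OF tI(2) tI(1)] by simp
    qed
    have gd1: "\<forall>t\<in>?J. b t \<in> cg_hom B 1" using gdJ by (simp add: X.good_def)
    let ?e = "esing {\<tau>} :: 'i set \<Rightarrow> 'k"
    let ?y = "D ?e"
    have yJ: "?y \<in> EJ I ?J" using DJ[OF less.prems] .
    have cutG: "G B (cut b R \<tau>) ?y = G B b ?y"
      by (rule X.G_cong[OF yJ _ gd1]) (auto simp: cut_apply R_def Jt_def)
    have btau: "b \<tau> = (SOME \<beta>. \<beta> \<in> cg_hom B 1 \<and> \<psi> \<beta> = f ?e \<and> cg_diff B \<beta> = G B b ?y)"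
      using brec[of \<tau>] cutG by (simp add: H_def)
    have ml: "D ?y \<in> EJ I ?J" "G B b (D ?y) = cg_diff B (G B b ?y)" "\<psi> (G B b ?y) = f ?y"
      using X.main_lin[OF ch JI gdJ yJ] by auto
    have eh: "?e \<in> cg_hom (ext_alg I D) 1" using eH[OF less.prems] .
    have ec: "?e \<in> cg_carrier (ext_alg I D)" using eC[OF less.prems] by simp
    have yh: "?y \<in> cg_hom (ext_alg I D) 2" using X.E.d_hom[OF eh] by (simp add: numeral_2_eq_2)
    have Gy2: "G B b ?y \<in> cg_hom B 2" by (rule X.G_hom[OF yJ yh gd1])
    have GyC: "G B b ?y \<in> cg_carrier B" using Gy2 X.B.hom_c by blast
    have Dy0: "D ?y = (\<lambda>S. 0)" using X.E.dd[OF ec] by simp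
    have "cg_diff B (G B b ?y) = G B b (D ?y)" using ml(2) by simp
    also have "\<dots> = G B b (\<lambda>S. 0)" using Dy0 by simp
    also have "\<dots> = cg_zero B" by (rule X.G_zero)
    finally have dG: "cg_diff B (G B b ?y) = cg_zero B" .
    have fe1: "f ?e \<in> cg_hom A 1" using cdga_homD(2)[OF assms(6) eh] .
    have feC: "f ?e \<in> cg_carrier A" using fe1 X.A.hom_c by blast
    have fy: "f ?y = cg_diff A (f ?e)" using cdga_homD(7)[OF assms(6) ec] by simp
    have "coboundary A 2 (\<psi> (G B b ?y))"
      unfolding coboundary_def using ml(3) fy fe1 by (auto simp: numeral_2_eq_2)
    moreover have "cocycle B 2 (G B b ?y)" using Gy2 dG by (simp add: cocycle_def)
    ultimately have "coboundary B 2 (G B b ?y)" using qpsi(1) by blast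
    then obtain \<beta>0 where b0: "\<beta>0 \<in> cg_hom B 1" "cg_diff B \<beta>0 = G B b ?y"
      unfolding coboundary_def
    proof (elim disjE exE conjE)
      assume "G B b ?y = cg_zero B"
      then show ?thesis using that[of "cg_zero B"] by simp
    next
      fix j z assume "Suc j = 2" "z \<in> cg_hom B j" "G B b ?y = cg_diff B z"
      then show ?thesis using that[of z] by (simp add: numeral_2_eq_2)
    qed
    have b0C: "\<beta>0 \<in> cg_carrier B" using b0 X.B.hom_c by blast
    let ?w = "cg_sub A (\<psi> \<beta>0) (f ?e)"
    have pb0: "\<psi> \<beta>0 \<in> cg_hom A 1" using cdga_homD(2)[OF hpsi b0(1)] .
    have pb0C: "\<psi> \<beta>0 \<in> cg_carrier A" using pb0 X.A.hom_c by blast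
    have wh: "?w \<in> cg_hom A 1" using pb0 fe1 by simp
    have "cg_diff A ?w = cg_sub A (cg_diff A (\<psi> \<beta>0)) (cg_diff A (f ?e))"
      using X.A.d_sub[OF pb0C feC] .
    also have "cg_diff A (\<psi> \<beta>0) = \<psi> (cg_diff B \<beta>0)" using cdga_homD(7)[OF hpsi b0C] by simp
    also have "\<dots> = f ?y" using b0(2) ml(3) by simp
    also have "cg_diff A (f ?e) = f ?y" using fy by simp
    finally have "cg_diff A ?w = cg_zero A"
      using X.A.sub_zero_iff[of "f ?y" "f ?y"] X.A.d_c[OF feC] fy by simp
    then have "cocycle A 1 ?w" using wh by (simp add: cocycle_def)
    then obtain z where z: "cocycle B 1 z" "coboundary A 1 (cg_sub A (\<psi> z) ?w)" using qpsi(2) by blast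
    have zh: "z \<in> cg_hom B 1" and dz: "cg_diff B z = cg_zero B" using z(1) by (auto simp: cocycle_def)
    have zC: "z \<in> cg_carrier B" using zh X.B.hom_c by blast
    have pzC: "\<psi> z \<in> cg_carrier A" using cdga_homD(1)[OF hpsi zC] .
    have wC: "?w \<in> cg_carrier A" using wh X.A.hom_c by blast
    have "cg_sub A (\<psi> z) ?w = cg_zero A" using X.A.cob1_zero[OF assms(5) z(2)] .
    then have pz: "\<psi> z = ?w" using X.A.sub_zero_iff[OF pzC wC] by simp
    let ?\<beta> = "cg_sub B \<beta>0 z"
    have "?\<beta> \<in> cg_hom B 1" using b0(1) zh by simp
    moreover have "\<psi> ?\<beta> = f ?e"
    proof -
      have "\<psi> ?\<beta> = cg_sub A (\<psi> \<beta>0) ?w" using hom_sub[OF assms(4,3) hpsi b0C zC] pz by simp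
      moreover have "\<psi> \<beta>0 = cg_add A ?w (f ?e)" using X.A.sub_eq[OF pb0C feC wC] by (simp add: cg_sub_def)
      ultimately show ?thesis using X.A.sub_eq[OF pb0C wC feC] X.A.add_comm[OF wC feC]
        by (simp add: cg_sub_def)
    qed
    moreover have "cg_diff B ?\<beta> = G B b ?y"
      using X.B.d_sub[OF b0C zC] b0(2) dz GyC by simp
    ultimately have ex: "\<exists>\<beta>. \<beta> \<in> cg_hom B 1 \<and> \<psi> \<beta> = f ?e \<and> cg_diff B \<beta> = G B b ?y" by blast
    show ?case using someI_ex[OF ex] btau by simp
  qed
  have gdI: "X.good I b"
    unfolding X.good_def
  proof
    fix t assume t: "t \<in> I"
    have "Jt t \<subseteq> I" by (auto simp: Jt_def)
    then have "D (esing {t}) \<in> EJ I I" using X.EJ_mono[OF DJ[OF t]] by blast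
    then show "b t \<in> cg_hom B 1 \<and> \<psi> (b t) = f (esing {t}) \<and>
        cg_diff B (b t) = G B b (D (esing {t})) \<and> D (esing {t}) \<in> EJ I I"
      using Q[OF t] by simp
  qed
  have gd1: "\<forall>t\<in>I. b t \<in> cg_hom B 1" using gdI by (simp add: X.good_def)
  define g where "g = G B b"
  have EJc: "c \<in> EJ I I" if "c \<in> ext_carrier I" for c :: "'i set \<Rightarrow> 'k" using that by (auto simp: EJ_def ext_carrier_def)
  have ml: "D c \<in> EJ I I \<and> g (D c) = cg_diff B (g c) \<and> \<psi> (g c) = f c" if "c \<in> ext_carrier I" for c
    using X.main_lin[OF ch subset_refl gdI EJc[OF that]] by (simp add: g_def)
  have hg: "cdga_hom (ext_alg I D) B g"
    unfolding cdga_hom_def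
  proof (intro conjI ballI allI)
    fix x assume x: "x \<in> cg_carrier (ext_alg I D)"
    then have xJ: "x \<in> EJ I I" using EJc by simp
    show "g x \<in> cg_carrier B" unfolding g_def by (rule X.G_c[OF xJ gd1])
    show "g (cg_diff (ext_alg I D) x) = cg_diff B (g x)" using ml x by simp
    fix a show "g (cg_smult (ext_alg I D) a x) = cg_smult B a (g x)"
      using X.G_sm[OF xJ gd1, of a] by (simp add: g_def)
  next
    fix x y assume x: "x \<in> cg_carrier (ext_alg I D)" and y: "y \<in> cg_carrier (ext_alg I D)"
    then have xJ: "x \<in> EJ I I" and yJ: "y \<in> EJ I I" using EJc by auto
    show "g (cg_add (ext_alg I D) x y) = cg_add B (g x) (g y)"
      using X.G_add[OF xJ yJ gd1] by (simp add: g_def)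
    show "g (cg_mul (ext_alg I D) x y) = cg_mul B (g x) (g y)"
      using X.G_mul[OF ch xJ yJ gd1 subset_refl] by (simp add: g_def)
  next
    fix i x assume x: "x \<in> cg_hom (ext_alg I D) i"
    then have xJ: "x \<in> EJ I I" using EJc X.E.hom_c by simp
    show "g x \<in> cg_hom B i" unfolding g_def by (rule X.G_hom[OF xJ x gd1])
  next
    have "g (esing {}) = mm B b {}" unfolding g_def by (rule X.G_esing) (use gd1 in auto)
    then show "g (cg_one (ext_alg I D)) = cg_one B" by (simp add: mm_def)
  qed
  have comm: "\<forall>x\<in>cg_carrier (ext_alg I D). \<psi> (g x) = f x" using ml by simp
  have qi: "quasi_iso (ext_alg I D) B g" if qf: "quasi_iso (ext_alg I D) A f"
  proof -
    have qf1: "\<And>i z. cocycle (ext_alg I D) i z \<Longrightarrow> coboundary A i (f z) \<Longrightarrow> coboundary (ext_alg I D) i z"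
      and qf2: "\<And>i w. cocycle A i w \<Longrightarrow> \<exists>z. cocycle (ext_alg I D) i z \<and> coboundary A i (cg_sub A (f z) w)"
      using qf unfolding quasi_iso_def by blast+
    have psi_cob: "coboundary A i (\<psi> v)" if "coboundary B i v" for i v
      using that unfolding coboundary_def
    proof (elim disjE exE conjE)
      assume "v = cg_zero B"
      then show "\<psi> v = cg_zero A \<or> (\<exists>j y. Suc j = i \<and> y \<in> cg_hom A j \<and> \<psi> v = cg_diff A y)"
        using hom_zero[OF assms(4,3) hpsi] by simp
    next
      fix j y assume "Suc j = i" "y \<in> cg_hom B j" "v = cg_diff B y"
      moreover then have "\<psi> v = cg_diff A (\<psi> y)" using cdga_homD(7)[OF hpsi] X.B.hom_c by blast
      ultimately show "\<psi> v = cg_zero A \<or> (\<exists>j y. Suc j = i \<and> y \<in> cg_hom A j \<and> \<psi> v = cg_diff A y)"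
        using cdga_homD(2)[OF hpsi] by blast
    qed
    show ?thesis
      unfolding quasi_iso_def
    proof (intro conjI allI impI hg)
      fix i z assume z: "cocycle (ext_alg I D) i z" and cb: "coboundary B i (g z)"
      have "z \<in> cg_carrier (ext_alg I D)" using z X.E.hom_c by (auto simp: cocycle_def)
      then have "\<psi> (g z) = f z" using comm by blast
      then have "coboundary A i (f z)" using psi_cob[OF cb] by simp
      then show "coboundary (ext_alg I D) i z" using qf1[OF z] by blast
    next
      fix i w assume w: "cocycle B i w"
      have wh: "w \<in> cg_hom B i" and dw: "cg_diff B w = cg_zero B" using w by (auto simp: cocycle_def)
      have wC: "w \<in> cg_carrier B" using wh X.B.hom_c by blast
      have "cocycle A i (\<psi> w)"
        using cdga_homD(2)[OF hpsi wh] cdga_homD(7)[OF hpsi wC] dw hom_zero[OF assms(4,3) hpsi]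
        by (simp add: cocycle_def)
      then obtain z where z: "cocycle (ext_alg I D) i z" "coboundary A i (cg_sub A (f z) (\<psi> w))"
        using qf2 by blast
      have zh: "z \<in> cg_hom (ext_alg I D) i" and dz: "D z = (\<lambda>S. 0)" using z(1) by (auto simp: cocycle_def)
      have zC: "z \<in> cg_carrier (ext_alg I D)" using zh X.E.hom_c by blast
      have gzh: "g z \<in> cg_hom B i" using cdga_homD(2)[OF hg zh] .
      have gzC: "g z \<in> cg_carrier B" using gzh X.B.hom_c by blast
      have "cg_diff B (g z) = g (D z)" using ml[of z] zC by simp
      also have "\<dots> = G B b (\<lambda>S. 0)" using dz by (simp add: g_def)
      also have "\<dots> = cg_zero B" by (rule X.G_zero)
      finally have "cg_diff B (g z) = cg_zero B" .
      then have "cocycle B i (cg_sub B (g z) w)"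
        using gzh wh X.B.d_sub[OF gzC wC] dw by (simp add: cocycle_def)
      moreover have "\<psi> (cg_sub B (g z) w) = cg_sub A (f z) (\<psi> w)"
        using hom_sub[OF assms(4,3) hpsi gzC wC] comm zC by simp
      ultimately have "coboundary B i (cg_sub B (g z) w)" using qpsi(1) z(2) by simp
      then show "\<exists>z. cocycle (ext_alg I D) i z \<and> coboundary B i (cg_sub B (g z) w)" using z(1) by blast
    qed
  qed
  show ?thesis using hg comm qi by blast
qed

end
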